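(* Let $\pi$ be an irreducible admissible representation of $G$ with Whittaker model $\mathcal{W}(\pi,\psi)$, and let $W\in\mathcal{W}(\pi,\psi)^J$ with $W(1)=1$ be such that $W(zg)=W(g)$ for all $z\in\mathcal{Z}$, $g\in G$, and $$X_{s_i}(W)(g)=-W(g)\ (i=1,\dots,n-1),\qquad X_u(W)(g)=\epsilon W(g)$$ for all $g\in G$, where $\epsilon$ is an $n$-th root of unity. Then for all $(k_1,\dots,k_n)\in\mathbb{Z}^n$, with $d=\varpi^{(k_1,\dots,k_n)}$, $$W(d)=\begin{cases}\epsilon^{\sum_{i=1}^nk_i}(-1)^{(n-1)\sum_{i=1}^nk_i}\delta_B(d) & \text{if } d\in T^+,\\ 0&\text{otherwise.}\end{cases}$$
   Context: $F$ is a non-archimedean local field with ring of integers $\mathcal{O}$, maximal ideal $\mathfrak{p}=\varpi\mathcal{O}$. $G=GL_n(F)$, $\mathcal{Z}$ its center, $N$ upper triangular unipotent matrices, $K=GL_n(\mathcal{O})$, $J$ the Iwahori subgroup (elements of $K$ whose reduction mod $\mathfrak{p}$ is upper triangular). $\varpi^{(k_1,\dots,k_n)}=\mathrm{diag}(\varpi^{k_1},\dots,\varpi^{k_n})$ and $T^+=\{\varpi^{(k_1,\dots,k_n)}:k_1\ge\dots\ge k_n\}$. $\delta_B(\mathrm{diag}(t))=\prod|t_i|^{n+1-2i}$. $s_i$ is the permutation matrix of the transposition $(i,i+1)$ and $u=\begin{pmatrix}0&I_{n-1}\\ \varpi&0\end{pmatrix}$. For $g\in G$, $X_g$ is the characteristic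 function of $JgJ$ in the Iwahori Hecke algebra, acting on right $J$-invariant functions by $X_g(f)(x)=\sum_i f(x\gamma_i)$ where $JgJ=\bigsqcup_i\gamma_iJ$. $\psi$ is an unramified additive character of $F$ (trivial on $\mathcal{O}$, nontrivial on $\mathfrak{p}^{-1}$), extended to $N$ by $\psi(n)=\psi(\sum_i n_{i,i+1})$; $\mathcal{W}(\pi,\psi)$ consists of functions $W$ on $G$ with $W(ng)=\psi(n)W(g)$, $G$ acting by right translation, and the superscript $J$ denotes right $J$-invariant functions. *)

theory Defs
  imports Complex_Main "Jordan_Normal_Form.Determinant"
begin

text \<open>A field F (type 'a) with a normalized discrete valuation v (the value at 0 is
irrelevant and ignored; 0 is treated as having valuation +infinity).\<close>

definition pw :: "('a::field \<Rightarrow> int) \<Rightarrow> int \<Rightarrow> 'a set" where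
  "pw v m = {x. x = 0 \<or> v x \<ge> m}"

abbreviation intO :: "('a::field \<Rightarrow> int) \<Rightarrow> 'a set" where
  "intO v \<equiv> pw v 0"

definition residue_classes :: "('a::field \<Rightarrow> int) \<Rightarrow> 'a set set" where
  "residue_classes v = intO v // {(x, y). x \<in> intO v \<and> y \<in> intO v \<and> x - y \<in> pw v 1}"

definition resq :: "('a::field \<Rightarrow> int) \<Rightarrow> nat" where
  "resq v = card (residue_classes v)"

definition nonarch_local_field :: "('a::field \<Rightarrow> int) \<Rightarrow> bool" where
  "nonarch_local_field v \<longleftrightarrow>
     (\<forall>x y. x \<noteq> 0 \<and> y \<noteq> 0 \<longrightarrow> v (x * y) = v x + v y) \<and>
     (\<forall>x y. x \<noteq> 0 \<and> y \<noteq> 0 \<and> x + y \<noteq> 0 \<longrightarrow> v (x + y) \<ge> min (v x) (v y)) \<and>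
     (\<forall>k. \<exists>x. x \<noteq> 0 \<and> v x = k) \<and>
     finite (residue_classes v) \<and>
     (\<forall>s :: nat \<Rightarrow> 'a. (\<forall>m. \<exists>N. \<forall>i\<ge>N. \<forall>j\<ge>N. s i - s j \<in> pw v m) \<longrightarrow>
        (\<exists>L. \<forall>m. \<exists>N. \<forall>i\<ge>N. s i - L \<in> pw v m))"

definition absv :: "('a::field \<Rightarrow> int) \<Rightarrow> 'a \<Rightarrow> real" where
  "absv v x = (if x = 0 then 0 else real (resq v) powi (- v x))"

definition GL :: "nat \<Rightarrow> 'a::field mat set" where
  "GL n = {A \<in> carrier_mat n n. det A \<noteq> 0}"

definition centre :: "nat \<Rightarrow> 'a::field mat set" where
  "centre n = {c \<cdot>\<^sub>m (1\<^sub>m n) | c. c \<noteq> 0}"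

definition unipN :: "nat \<Rightarrow> 'a::field mat set" where
  "unipN n = {A \<in> carrier_mat n n. \<forall>i<n. \<forall>j<n.
      (j < i \<longrightarrow> A $$ (i, j) = 0) \<and> (i = j \<longrightarrow> A $$ (i, j) = 1)}"

definition iwahoriJ :: "nat \<Rightarrow> ('a::field \<Rightarrow> int) \<Rightarrow> 'a mat set" where
  "iwahoriJ n v = {A \<in> carrier_mat n n. det A \<noteq> 0 \<and> v (det A) = 0 \<and>
      (\<forall>i<n. \<forall>j<n. A $$ (i, j) \<in> intO v \<and> (j < i \<longrightarrow> A $$ (i, j) \<in> pw v 1))}"

text \<open>Principal congruence subgroups K_m = 1 + p^m M_n(O), m \<ge> 1 (a neighbourhood basis
of the identity consisting of compact open subgroups).\<close>
definition congK :: "nat \<Rightarrow> ('a::field \<Rightarrow> int) \<Rightarrow> int \<Rightarrow> 'a mat set" where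
  "congK n v m = {A \<in> GL n. \<forall>i<n. \<forall>j<n. A $$ (i, j) - (1\<^sub>m n) $$ (i, j) \<in> pw v m}"

definition diagpw :: "nat \<Rightarrow> 'a::field \<Rightarrow> (nat \<Rightarrow> int) \<Rightarrow> 'a mat" where
  "diagpw n pi0 k = mat n n (\<lambda>(a, b). if a = b then pi0 powi (k a) else 0)"

definition Tplus :: "nat \<Rightarrow> 'a::field \<Rightarrow> 'a mat set" where
  "Tplus n pi0 = {diagpw n pi0 k | k. \<forall>i. i + 1 < n \<longrightarrow> k i \<ge> k (i + 1)}"

text \<open>delta_B(diag(t)) = prod_i |t_i|^(n+1-2i), i = 1..n (here 0-indexed: exponent n-1-2i).\<close>
definition deltaB :: "nat \<Rightarrow> ('a::field \<Rightarrow> int) \<Rightarrow> 'a mat \<Rightarrow> real" where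
  "deltaB n v t = (\<Prod>i<n. absv v (t $$ (i, i)) powi (int n - 1 - 2 * int i))"

text \<open>s_i, i = 0..n-2, the permutation matrix of the transposition (i, i+1).\<close>
definition sperm :: "nat \<Rightarrow> nat \<Rightarrow> 'a::field mat" where
  "sperm n i = mat n n (\<lambda>(a, b).
      if b = (if a = i then i + 1 else if a = i + 1 then i else a) then 1 else 0)"

definition umat :: "nat \<Rightarrow> 'a::field \<Rightarrow> 'a mat" where
  "umat n pi0 = mat n n (\<lambda>(a, b). if b = a + 1 then 1 else if a = n - 1 \<and> b = 0 then pi0 else 0)"

definition double_coset :: "nat \<Rightarrow> ('a::field \<Rightarrow> int) \<Rightarrow> 'a mat \<Rightarrow> 'a mat set" where
  "double_coset n v g = {a * g * b | a b. a \<in> iwahoriJ n v \<and> b \<in> iwahoriJ n v}"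

definition left_cosets :: "nat \<Rightarrow> ('a::field \<Rightarrow> int) \<Rightarrow> 'a mat \<Rightarrow> 'a mat set set" where
  "left_cosets n v g = {{\<gamma> * b | b. b \<in> iwahoriJ n v} | \<gamma>. \<gamma> \<in> double_coset n v g}"

text \<open>X_g(f)(x) = sum_i f(x gamma_i) where J g J = disjoint union of gamma_i J.\<close>
definition hecke :: "nat \<Rightarrow> ('a::field \<Rightarrow> int) \<Rightarrow> 'a mat \<Rightarrow> ('a mat \<Rightarrow> complex) \<Rightarrow> 'a mat \<Rightarrow> complex" where
  "hecke n v g f x = (\<Sum>C\<in>left_cosets n v g. f (x * (SOME \<gamma>. \<gamma> \<in> C)))"

definition unram_char :: "('a::field \<Rightarrow> int) \<Rightarrow> ('a \<Rightarrow> complex) \<Rightarrow> bool" where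
  "unram_char v \<psi> \<longleftrightarrow> (\<forall>x y. \<psi> (x + y) = \<psi> x * \<psi> y) \<and>
     (\<forall>x\<in>intO v. \<psi> x = 1) \<and> (\<exists>x\<in>pw v (-1). \<psi> x \<noteq> 1)"

definition psiN :: "nat \<Rightarrow> ('a::field \<Rightarrow> complex) \<Rightarrow> 'a mat \<Rightarrow> complex" where
  "psiN n \<psi> A = \<psi> (\<Sum>i<n - 1. A $$ (i, i + 1))"

definition fin_dim :: "('b \<Rightarrow> complex) set \<Rightarrow> bool" where
  "fin_dim S \<longleftrightarrow> (\<exists>B. finite B \<and> B \<subseteq> S \<and> (\<forall>f\<in>S. \<exists>c. f = (\<lambda>x. \<Sum>b\<in>B. c b * b x)))"

definition fn_subspace :: "('b \<Rightarrow> complex) set \<Rightarrow> bool" where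
  "fn_subspace S \<longleftrightarrow> (\<lambda>_. 0) \<in> S \<and> (\<forall>f\<in>S. \<forall>g\<in>S. (\<lambda>x. f x + g x) \<in> S) \<and>
     (\<forall>c. \<forall>f\<in>S. (\<lambda>x. c * f x) \<in> S)"

definition rt_stable :: "nat \<Rightarrow> ('a::field mat \<Rightarrow> complex) set \<Rightarrow> bool" where
  "rt_stable n S \<longleftrightarrow> (\<forall>f\<in>S. \<forall>g\<in>GL n. (\<lambda>x. if x \<in> GL n then f (x * g) else 0) \<in> S)"

definition fixed_by :: "nat \<Rightarrow> 'a::field mat set \<Rightarrow> ('a mat \<Rightarrow> complex) \<Rightarrow> bool" where
  "fixed_by n H f \<longleftrightarrow> (\<forall>h\<in>H. \<forall>g\<in>GL n. f (g * h) = f g)"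

definition irred_adm_whittaker_model ::
  "nat \<Rightarrow> ('a::field \<Rightarrow> int) \<Rightarrow> ('a \<Rightarrow> complex) \<Rightarrow> ('a mat \<Rightarrow> complex) set \<Rightarrow> bool" where
  "irred_adm_whittaker_model n v \<psi> V \<longleftrightarrow>
     fn_subspace V \<and> rt_stable n V \<and>
     (\<forall>f\<in>V. \<forall>x. x \<notin> GL n \<longrightarrow> f x = 0) \<and>
     (\<forall>f\<in>V. \<forall>u\<in>unipN n. \<forall>g\<in>GL n. f (u * g) = psiN n \<psi> u * f g) \<and>
     (\<forall>f\<in>V. \<exists>m\<ge>1. fixed_by n (congK n v m) f) \<and>
     (\<forall>m\<ge>1. fin_dim {f\<in>V. fixed_by n (congK n v m) f}) \<and>
     V \<noteq> {\<lambda>_. 0} \<and>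
     (\<forall>U. U \<subseteq> V \<and> fn_subspace U \<and> rt_stable n U \<longrightarrow> U = {\<lambda>_. 0} \<or> U = V)"

end

theory Submission
  imports Defs
begin


locale valf =
  fixes v :: "'a::field \<Rightarrow> int"
  assumes nl: "nonarch_local_field v"
begin

lemma vmult: "x \<noteq> 0 \<Longrightarrow> y \<noteq> 0 \<Longrightarrow> v (x * y) = v x + v y"
  using nl unfolding nonarch_local_field_def by blast

lemma vadd: "x \<noteq> 0 \<Longrightarrow> y \<noteq> 0 \<Longrightarrow> x + y \<noteq> 0 \<Longrightarrow> v (x + y) \<ge> min (v x) (v y)"
  using nl unfolding nonarch_local_field_def by blast

lemma v1: "v 1 = 0"
  using vmult[of 1 1] by simp

lemma vinv: "x \<noteq> 0 \<Longrightarrow> v (inverse x) = - v x"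
  using vmult[of x "inverse x"] v1 by simp

lemma vm1: "v (-1) = 0"
  using vmult[of "-1" "-1"] v1 by simp

lemma vneg: "x \<noteq> 0 \<Longrightarrow> v (- x) = v x"
  using vmult[of "-1" x] vm1 by simp

lemma pw_add: "x \<in> pw v m \<Longrightarrow> y \<in> pw v m \<Longrightarrow> x + y \<in> pw v m"
  unfolding pw_def using vadd[of x y] by (cases "x = 0"; cases "y = 0"; cases "x + y = 0"; auto)

lemma pw_neg: "x \<in> pw v m \<Longrightarrow> - x \<in> pw v m"
  unfolding pw_def using vneg[of x] by (cases "x = 0") auto

lemma pw_diff: "x \<in> pw v m \<Longrightarrow> y \<in> pw v m \<Longrightarrow> x - y \<in> pw v m"
  using pw_add[of x m "-y"] pw_neg[of y m] by simp

lemma pw_zero[simp]: "0 \<in> pw v m"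
  unfolding pw_def by auto

lemma pw_mult: "x \<in> pw v m \<Longrightarrow> y \<in> pw v k \<Longrightarrow> x * y \<in> pw v (m + k)"
  unfolding pw_def using vmult[of x y] by (cases "x = 0"; cases "y = 0") auto

lemma pw_mono: "x \<in> pw v m \<Longrightarrow> k \<le> m \<Longrightarrow> x \<in> pw v k"
  unfolding pw_def by auto

lemma pw_multO: "x \<in> pw v m \<Longrightarrow> y \<in> intO v \<Longrightarrow> x * y \<in> pw v m"
  using pw_mult[of x m y 0] by simp

lemma pw_Omult: "x \<in> intO v \<Longrightarrow> y \<in> pw v m \<Longrightarrow> x * y \<in> pw v m"
  using pw_mult[of x 0 y m] by simp

lemma one_O[simp]: "1 \<in> intO v"
  unfolding pw_def using v1 by auto

lemma one_notp: "1 \<notin> pw v 1"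
  unfolding pw_def using v1 by auto

lemma m1_O[simp]: "-1 \<in> intO v"
  unfolding pw_def using vm1 by auto

lemma pw_sum: "(\<And>x. x \<in> S \<Longrightarrow> f x \<in> pw v m) \<Longrightarrow> sum f S \<in> pw v m"
  by (induction S rule: infinite_finite_induct) (auto intro: pw_add)

lemma O_prod: "(\<And>x. x \<in> S \<Longrightarrow> f x \<in> intO v) \<Longrightarrow> prod f S \<in> intO v"
proof (induction S rule: infinite_finite_induct)
  case (insert x F)
  then show ?case using pw_mult[of "f x" 0 "prod f F" 0] by simp
qed auto

lemma p_prod: "finite S \<Longrightarrow> (\<And>x. x \<in> S \<Longrightarrow> f x \<in> intO v) \<Longrightarrow> s \<in> S \<Longrightarrow> f s \<in> pw v 1
   \<Longrightarrow> prod f S \<in> pw v 1"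
proof -
  assume "finite S" "\<And>x. x \<in> S \<Longrightarrow> f x \<in> intO v" "s \<in> S" "f s \<in> pw v 1"
  then have "prod f S = f s * prod f (S - {s})" by (simp add: prod.remove)
  moreover have "prod f (S - {s}) \<in> intO v" using \<open>\<And>x. x \<in> S \<Longrightarrow> f x \<in> intO v\<close> by (intro O_prod) auto
  ultimately show ?thesis using pw_multO \<open>f s \<in> pw v 1\<close> by auto
qed

lemma unit_of: "x \<in> intO v \<Longrightarrow> x \<notin> pw v 1 \<Longrightarrow> x \<noteq> 0 \<and> v x = 0"
  unfolding pw_def by auto

lemma inv_unit_O: "x \<in> intO v \<Longrightarrow> x \<notin> pw v 1 \<Longrightarrow> inverse x \<in> intO v"
proof -
  assume "x \<in> intO v" "x \<notin> pw v 1"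
  then have "x \<noteq> 0" "v x = 0" using unit_of by blast+
  then show ?thesis unfolding pw_def by (simp add: vinv)
qed

lemma powi_ne: "(pi0::'a) \<noteq> 0 \<Longrightarrow> pi0 powi k \<noteq> 0"
  by simp

lemma v_pow: "pi0 \<noteq> 0 \<Longrightarrow> v (pi0 ^ m) = int m * v pi0"
  by (induction m) (auto simp: v1 vmult algebra_simps)

lemma v_powi: "pi0 \<noteq> 0 \<Longrightarrow> v (pi0 powi k) = k * v pi0"
  by (cases "k \<ge> 0") (auto simp: power_int_def v_pow vinv)

lemma powi_pw: "pi0 \<noteq> 0 \<Longrightarrow> v pi0 = 1 \<Longrightarrow> pi0 powi k \<in> pw v k"
  unfolding pw_def using v_powi[of pi0 k] by auto

end



definition mmat :: "nat \<Rightarrow> (nat \<Rightarrow> 'a::field) \<Rightarrow> (nat \<Rightarrow> nat) \<Rightarrow> 'a mat" where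
  "mmat n f \<pi> = mat n n (\<lambda>(a, b). if a = \<pi> b then f b else 0)"

definition elm :: "nat \<Rightarrow> nat \<Rightarrow> nat \<Rightarrow> 'a::field \<Rightarrow> 'a mat" where
  "elm n p q c = mat n n (\<lambda>(a, b). (if a = b then 1 else 0) + (if a = p \<and> b = q then c else 0))"

definition swp :: "nat \<Rightarrow> nat \<Rightarrow> nat" where
  "swp i b = (if b = i then Suc i else if b = Suc i then i else b)"

definition sig :: "nat \<Rightarrow> nat \<Rightarrow> nat" where
  "sig n b = (if b = 0 then n - 1 else b - 1)"

lemma mono_carrier[simp]: "mmat n f \<pi> \<in> carrier_mat n n"
  unfolding mmat_def by simp
lemma elm_carrier[simp]: "elm n p q c \<in> carrier_mat n n"
  unfolding elm_def by simp
lemma mono_dims[simp]: "dim_row (mmat n f \<pi>) = n" "dim_col (mmat n f \<pi>) = n"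
  unfolding mmat_def by simp_all
lemma elm_dims[simp]: "dim_row (elm n p q c) = n" "dim_col (elm n p q c) = n"
  unfolding elm_def by simp_all
lemma mono_index[simp]: "a < n \<Longrightarrow> b < n \<Longrightarrow> mmat n f \<pi> $$ (a, b) = (if a = \<pi> b then f b else 0)"
  unfolding mmat_def by simp
lemma elm_index[simp]: "a < n \<Longrightarrow> b < n \<Longrightarrow> elm n p q c $$ (a, b) =
   (if a = b then 1 else 0) + (if a = p \<and> b = q then c else 0)"
  unfolding elm_def by simp

lemma mult_entry:
  assumes "A \<in> carrier_mat n n" "B \<in> carrier_mat n n" "i < n" "j < n"
  shows "(A * B) $$ (i, j) = (\<Sum>t<n. A $$ (i, t) * B $$ (t, j))"
  using assms by (simp add: scalar_prod_def atLeast0LessThan)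

lemma mono_mult:
  assumes "\<And>b. b < n \<Longrightarrow> \<rho> b < n"
  shows "mmat n f \<pi> * mmat n g \<rho> = mmat n (\<lambda>b. f (\<rho> b) * g b) (\<pi> \<circ> \<rho>)"
proof (rule eq_matI)
  fix a b assume ab: "a < dim_row (mmat n (\<lambda>b. f (\<rho> b) * g b) (\<pi> \<circ> \<rho>))"
    "b < dim_col (mmat n (\<lambda>b. f (\<rho> b) * g b) (\<pi> \<circ> \<rho>))"
  then have a: "a < n" and b: "b < n" by auto
  have "(mmat n f \<pi> * mmat n g \<rho>) $$ (a, b) = (\<Sum>t<n. mmat n f \<pi> $$ (a, t) * mmat n g \<rho> $$ (t, b))"
    using a b by (intro mult_entry) auto
  also have "\<dots> = (\<Sum>t<n. if t = \<rho> b then (if a = \<pi> t then f t * g b else 0) else 0)"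
    using a b by (intro sum.cong) auto
  also have "\<dots> = (if a = \<pi> (\<rho> b) then f (\<rho> b) * g b else 0)"
    using assms[OF b] by (simp add: sum.delta)
  finally show "(mmat n f \<pi> * mmat n g \<rho>) $$ (a, b) = mmat n (\<lambda>b. f (\<rho> b) * g b) (\<pi> \<circ> \<rho>) $$ (a, b)"
    using a b by simp
qed auto

lemma mult_mono_entry:
  assumes "X \<in> carrier_mat n n" "a < n" "b < n" "\<pi> b < n"
  shows "(X * mmat n f \<pi>) $$ (a, b) = X $$ (a, \<pi> b) * f b"
proof -
  have "(X * mmat n f \<pi>) $$ (a, b) = (\<Sum>t<n. X $$ (a, t) * mmat n f \<pi> $$ (t, b))"
    using assms by (intro mult_entry) auto
  also have "\<dots> = (\<Sum>t<n. if t = \<pi> b then X $$ (a, t) * f b else 0)"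
    using assms by (intro sum.cong) auto
  also have "\<dots> = X $$ (a, \<pi> b) * f b"
    using assms by (simp add: sum.delta)
  finally show ?thesis .
qed

lemma mono_mult_entry:
  assumes "X \<in> carrier_mat n n" "a < n" "b < n" "tz < n" "\<pi> tz = a" "inj_on \<pi> {..<n}"
  shows "(mmat n f \<pi> * X) $$ (a, b) = f tz * X $$ (tz, b)"
proof -
  have "(mmat n f \<pi> * X) $$ (a, b) = (\<Sum>t<n. mmat n f \<pi> $$ (a, t) * X $$ (t, b))"
    using assms by (intro mult_entry) auto
  also have "\<dots> = (\<Sum>t<n. if t = tz then f tz * X $$ (tz, b) else 0)"
    using assms by (intro sum.cong) (auto simp: inj_on_def)
  also have "\<dots> = f tz * X $$ (tz, b)"
    using assms by (simp add: sum.delta)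
  finally show ?thesis .
qed

lemma elm_mult_entry:
  assumes "X \<in> carrier_mat n n" "a < n" "b < n" "q < n"
  shows "(elm n p q c * X) $$ (a, b) = X $$ (a, b) + (if a = p then c * X $$ (q, b) else 0)"
proof -
  have "(elm n p q c * X) $$ (a, b) = (\<Sum>t<n. elm n p q c $$ (a, t) * X $$ (t, b))"
    using assms by (intro mult_entry) auto
  also have "\<dots> = (\<Sum>t<n. (if t = a then X $$ (a, b) else 0) + (if t = q then (if a = p then c * X $$ (q, b) else 0) else 0))"
    using assms by (intro sum.cong) (auto simp: algebra_simps)
  also have "\<dots> = X $$ (a, b) + (if a = p then c * X $$ (q, b) else 0)"
    using assms by (simp add: sum.distrib sum.delta)
  finally show ?thesis .
qed

lemma mult_elm_entry:
  assumes "X \<in> carrier_mat n n" "a < n" "b < n" "p < n"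
  shows "(X * elm n p q c) $$ (a, b) = X $$ (a, b) + (if b = q then X $$ (a, p) * c else 0)"
proof -
  have "(X * elm n p q c) $$ (a, b) = (\<Sum>t<n. X $$ (a, t) * elm n p q c $$ (t, b))"
    using assms by (intro mult_entry) auto
  also have "\<dots> = (\<Sum>t<n. (if t = b then X $$ (a, b) else 0) + (if t = p then (if b = q then X $$ (a, p) * c else 0) else 0))"
    using assms by (intro sum.cong) (auto simp: algebra_simps)
  also have "\<dots> = X $$ (a, b) + (if b = q then X $$ (a, p) * c else 0)"
    using assms by (simp add: sum.distrib sum.delta)
  finally show ?thesis .
qed

lemma mono_id_one: "(\<And>b. b < n \<Longrightarrow> \<pi> b = b) \<Longrightarrow> (\<And>b. b < n \<Longrightarrow> f b = 1) \<Longrightarrow> mmat n f \<pi> = 1\<^sub>m n"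
  by (rule eq_matI) auto

lemma mono_cong: "(\<And>b. b < n \<Longrightarrow> \<pi> b = \<rho> b) \<Longrightarrow> (\<And>b. b < n \<Longrightarrow> f b = g b) \<Longrightarrow> mmat n f \<pi> = mmat n g \<rho>"
  by (rule eq_matI) auto

lemma GL_mult: "A \<in> GL n \<Longrightarrow> B \<in> GL n \<Longrightarrow> A * B \<in> GL n"
  unfolding GL_def by (auto simp: det_mult)

lemma one_GL[simp]: "1\<^sub>m n \<in> GL n"
  unfolding GL_def by simp

lemma GL_of_inverse: "A \<in> carrier_mat n n \<Longrightarrow> B \<in> carrier_mat n n \<Longrightarrow> A * B = 1\<^sub>m n \<Longrightarrow> A \<in> GL n"
  unfolding GL_def using det_mult[of A n B] by auto

lemma mono_inverse:
  assumes "bij_betw \<pi> {..<n} {..<n}" "\<And>b. b < n \<Longrightarrow> f b \<noteq> 0"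
  shows "mmat n f \<pi> * mmat n (\<lambda>b. inverse (f (inv_into {..<n} \<pi> b))) (inv_into {..<n} \<pi>) = 1\<^sub>m n"
proof -
  let ?r = "inv_into {..<n} \<pi>"
  have r: "\<And>b. b < n \<Longrightarrow> ?r b < n" "\<And>b. b < n \<Longrightarrow> \<pi> (?r b) = b"
    using assms(1) by (metis bij_betw_def inv_into_into lessThan_iff, metis bij_betw_def f_inv_into_f lessThan_iff)
  show ?thesis
    apply (subst mono_mult)
    using r assms(2) by (auto intro!: mono_id_one)
qed

lemma mono_GL:
  assumes "bij_betw \<pi> {..<n} {..<n}" "\<And>b. b < n \<Longrightarrow> f b \<noteq> 0"
  shows "mmat n f \<pi> \<in> GL n"
  using GL_of_inverse[OF _ _ mono_inverse[OF assms]] by simp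

lemma elm_det: "p < q \<Longrightarrow> det (elm n p q c) = 1"
proof -
  assume pq: "p < q"
  have "upper_triangular (elm n p q c)"
    unfolding upper_triangular_def using pq by auto
  then have "det (elm n p q c) = prod_list (diag_mat (elm n p q c))"
    by (intro det_upper_triangular) auto
  also have "diag_mat (elm n p q c) = map (\<lambda>_. 1) [0..<n]"
    unfolding diag_mat_def using pq by (auto intro!: map_cong)
  finally show ?thesis by (simp add: map_replicate_const)
qed

lemma elm_GL: "p < q \<Longrightarrow> elm n p q c \<in> GL n"
  unfolding GL_def by (simp add: elm_det)

lemma elm_unipN: "p < q \<Longrightarrow> elm n p q c \<in> unipN n"
  unfolding unipN_def by auto

lemma elm_inv: "p \<noteq> q \<Longrightarrow> q < n \<Longrightarrow> elm n p q c * elm n p q d = elm n p q (c + d)"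
proof (rule eq_matI)
  fix i j assume "p \<noteq> q" "q < n" "i < dim_row (elm n p q (c + d))" "j < dim_col (elm n p q (c + d))"
  then show "(elm n p q c * elm n p q d) $$ (i, j) = elm n p q (c + d) $$ (i, j)"
    by (subst elm_mult_entry) (auto simp: algebra_simps)
qed auto

lemma elm_zero: "elm n p q 0 = 1\<^sub>m n"
  by (rule eq_matI) auto

lemma swp_lt: "Suc i < n \<Longrightarrow> b < n \<Longrightarrow> swp i b < n"
  unfolding swp_def by auto
lemma swp_swp[simp]: "swp i (swp i b) = b"
  unfolding swp_def by auto
lemma swp_bij: "Suc i < n \<Longrightarrow> bij_betw (swp i) {..<n} {..<n}"
  by (rule bij_betwI[where g = "swp i"]) (auto simp: swp_lt)

lemma sig_lt: "n \<ge> 1 \<Longrightarrow> b < n \<Longrightarrow> sig n b < n"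
  unfolding sig_def by auto
lemma sig_bij: "n \<ge> 1 \<Longrightarrow> bij_betw (sig n) {..<n} {..<n}"
  by (rule bij_betwI[where g = "\<lambda>b. if b = n - 1 then 0 else Suc b"]) (auto simp: sig_def)

lemma sperm_mono: "sperm n i = mmat n (\<lambda>_. 1) (swp i)"
  unfolding sperm_def mmat_def swp_def by (rule eq_matI) auto

lemma umat_mono: "n \<ge> 1 \<Longrightarrow> umat n pi0 = mmat n (\<lambda>b. if b = 0 then pi0 else 1) (sig n)"
  unfolding umat_def mmat_def sig_def by (rule eq_matI) auto

lemma diagpw_mono: "diagpw n pi0 k = mmat n (\<lambda>b. pi0 powi k b) id"
  unfolding diagpw_def mmat_def by (rule eq_matI) auto




lemma perm_desc:
  fixes p :: "nat \<Rightarrow> nat"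
  assumes "p permutes {0..<n}" "p \<noteq> id"
  shows "\<exists>i<n. p i < i"
proof (rule ccontr)
  assume "\<not> (\<exists>i<n. p i < i)"
  then have ge: "\<And>i. i < n \<Longrightarrow> i \<le> p i" by (metis leI)
  have s: "sum p {0..<n} = sum id {0..<n}"
    using sum.permute[OF assms(1), of id] by (simp add: comp_def)
  have eq: "\<And>i. i < n \<Longrightarrow> p i = i"
  proof (rule ccontr)
    fix j assume j: "j < n" "p j \<noteq> j"
    have "sum id {0..<n} < sum p {0..<n}"
    proof (rule sum_strict_mono_ex1)
      show "\<exists>a\<in>{0..<n}. id a < p a" using j ge[of j] by (intro bexI[of _ j]) auto
    qed (use ge in auto)
    with s show False by simp
  qed
  have "p = id"
  proof
    fix x show "p x = id x"
      using eq permutes_not_in[OF assms(1), of x] by (cases "x < n") auto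
  qed
  with assms(2) show False by simp
qed

context valf begin

lemma J_carrier: "A \<in> iwahoriJ n v \<Longrightarrow> A \<in> carrier_mat n n"
  unfolding iwahoriJ_def by simp

lemma J_GL: "A \<in> iwahoriJ n v \<Longrightarrow> A \<in> GL n"
  unfolding iwahoriJ_def GL_def by simp

lemma J_O: "A \<in> iwahoriJ n v \<Longrightarrow> i < n \<Longrightarrow> j < n \<Longrightarrow> A $$ (i, j) \<in> intO v"
  unfolding iwahoriJ_def by simp

lemma J_low: "A \<in> iwahoriJ n v \<Longrightarrow> i < n \<Longrightarrow> j < i \<Longrightarrow> A $$ (i, j) \<in> pw v 1"
  unfolding iwahoriJ_def by simp

lemma J_det: "A \<in> iwahoriJ n v \<Longrightarrow> det A \<noteq> 0 \<and> v (det A) = 0"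
  unfolding iwahoriJ_def by simp

lemma JI: "A \<in> carrier_mat n n \<Longrightarrow> det A \<noteq> 0 \<Longrightarrow> v (det A) = 0 \<Longrightarrow>
   (\<And>i j. i < n \<Longrightarrow> j < n \<Longrightarrow> A $$ (i, j) \<in> intO v) \<Longrightarrow>
   (\<And>i j. i < n \<Longrightarrow> j < i \<Longrightarrow> A $$ (i, j) \<in> pw v 1) \<Longrightarrow> A \<in> iwahoriJ n v"
  unfolding iwahoriJ_def by auto

lemma one_J: "1\<^sub>m n \<in> iwahoriJ n v"
  by (rule JI) (auto simp: v1)

lemma O_mult: "x \<in> intO v \<Longrightarrow> y \<in> intO v \<Longrightarrow> x * y \<in> intO v"
  using pw_mult[of x 0 y 0] by simp

lemma J_mult:
  assumes A: "A \<in> iwahoriJ n v" and B: "B \<in> iwahoriJ n v"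
  shows "A * B \<in> iwahoriJ n v"
proof (rule JI)
  have cA: "A \<in> carrier_mat n n" and cB: "B \<in> carrier_mat n n" using A B J_carrier by auto
  show "A * B \<in> carrier_mat n n" using cA cB by simp
  have d: "det (A * B) = det A * det B" using det_mult[OF cA cB] .
  show "det (A * B) \<noteq> 0" using d J_det[OF A] J_det[OF B] by simp
  show "v (det (A * B)) = 0" using d J_det[OF A] J_det[OF B] vmult by simp
  fix i j
  show "i < n \<Longrightarrow> j < n \<Longrightarrow> (A * B) $$ (i, j) \<in> intO v"
    using cA cB by (subst mult_entry[OF cA cB]) (auto intro!: pw_sum O_mult J_O[OF A] J_O[OF B])
  assume ij: "i < n" "j < i"
  have "(A * B) $$ (i, j) = (\<Sum>t<n. A $$ (i, t) * B $$ (t, j))" using ij by (intro mult_entry[OF cA cB]) auto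
  also have "\<dots> \<in> pw v 1"
  proof (rule pw_sum)
    fix t assume t: "t \<in> {..<n}"
    show "A $$ (i, t) * B $$ (t, j) \<in> pw v 1"
    proof (cases "t < i")
      case True
      then show ?thesis using ij t by (intro pw_multO J_low[OF A] J_O[OF B]) auto
    next
      case False
      then show ?thesis using ij t by (intro pw_Omult J_low[OF B] J_O[OF A]) auto
    qed
  qed
  finally show "(A * B) $$ (i, j) \<in> pw v 1" .
qed

lemma signof_O: "signof p \<in> intO v"
  using signof_pm_one[of p] by (metis insertE empty_iff m1_O one_O)


lemma m1_pow_O: "(-1::'a) ^ k \<in> intO v"
  by (induction k) (auto intro: O_mult pw_neg)

lemma det_O:
  assumes "A \<in> carrier_mat k k" "\<And>i j. i < k \<Longrightarrow> j < k \<Longrightarrow> A $$ (i, j) \<in> intO v"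
  shows "det A \<in> intO v"
proof -
  have "det A = (\<Sum>p\<in>{p. p permutes {0..<k}}. signof p * (\<Prod>i = 0..<k. A $$ (i, p i)))"
    using det_def'[OF assms(1)] .
  also have "\<dots> \<in> intO v"
  proof (rule pw_sum)
    fix p assume p: "p \<in> {p. p permutes {0..<k}}"
    have "(\<Prod>i = 0..<k. A $$ (i, p i)) \<in> intO v"
      using p by (intro O_prod assms(2)) (auto simp: permutes_in_image)
    then show "signof p * (\<Prod>i = 0..<k. A $$ (i, p i)) \<in> intO v"
      using pw_mult[OF signof_O, of _ 0] by fastforce
  qed
  finally show ?thesis .
qed

lemma J_diag:
  assumes A: "A \<in> iwahoriJ n v" and j: "j < n"
  shows "A $$ (j, j) \<notin> pw v 1"
proof
  assume jp: "A $$ (j, j) \<in> pw v 1"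
  have cA: "A \<in> carrier_mat n n" using J_carrier[OF A] .
  let ?P = "{p. p permutes {0..<n}}"
  let ?t = "\<lambda>p. signof p * (\<Prod>i = 0..<n. A $$ (i, p i))"
  have fin: "finite ?P" by (simp add: finite_permutations)
  have idP: "id \<in> ?P" by (simp add: permutes_id)
  have "det A = sum ?t ?P" using det_def'[OF cA] .
  also have "\<dots> = ?t id + sum ?t (?P - {id})" using sum.remove[OF fin idP] .
  finally have dA: "det A = ?t id + sum ?t (?P - {id})" .
  have t1: "?t id \<in> pw v 1"
  proof -
    have "(\<Prod>i = 0..<n. A $$ (i, id i)) \<in> pw v 1"
      using j jp by (intro p_prod[of _ _ j]) (auto intro: J_O[OF A])
    then show ?thesis by simp
  qed
  have t2: "sum ?t (?P - {id}) \<in> pw v 1"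
  proof (rule pw_sum)
    fix p assume p: "p \<in> ?P - {id}"
    then obtain i where i: "i < n" "p i < i" using perm_desc by blast
    have "(\<Prod>i = 0..<n. A $$ (i, p i)) \<in> pw v 1"
      using p i by (intro p_prod[of _ _ i]) (auto intro: J_O[OF A] J_low[OF A] simp: permutes_in_image)
    then show "?t p \<in> pw v 1" using pw_Omult[OF signof_O] by blast
  qed
  have "det A \<in> pw v 1" using dA pw_add[OF t1 t2] by simp
  then show False using J_det[OF A] unfolding pw_def by auto
qed

lemma J_diag_unit: "A \<in> iwahoriJ n v \<Longrightarrow> j < n \<Longrightarrow> inverse (A $$ (j, j)) \<in> intO v \<and> A $$ (j, j) \<noteq> 0"
  using J_diag J_O inv_unit_O unit_of by blast

lemma mat_delete_O:
  assumes "A \<in> carrier_mat n n" "\<And>i j. i < n \<Longrightarrow> j < n \<Longrightarrow> A $$ (i, j) \<in> intO v" "a < n" "b < n"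
  shows "det (mat_delete A a b) \<in> intO v"
proof (rule det_O)
  show "mat_delete A a b \<in> carrier_mat (n - 1) (n - 1)" using mat_delete_carrier[OF assms(1)] .
  fix i j assume "i < n - 1" "j < n - 1"
  then show "mat_delete A a b $$ (i, j) \<in> intO v"
    using assms unfolding mat_delete_def by (auto intro!: assms(2))
qed

lemma J_inv:
  assumes A: "A \<in> iwahoriJ n v"
  shows "\<exists>B\<in>iwahoriJ n v. A * B = 1\<^sub>m n \<and> B * A = 1\<^sub>m n"
proof -
  have cA: "A \<in> carrier_mat n n" using J_carrier[OF A] .
  define d where "d = det A"
  have d0: "d \<noteq> 0" "v d = 0" using J_det[OF A] d_def by auto
  define B where "B = inverse d \<cdot>\<^sub>m adj_mat A"
  have cadj: "adj_mat A \<in> carrier_mat n n" using adj_mat(1)[OF cA] .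
  have cB: "B \<in> carrier_mat n n" using cadj B_def by simp
  have AB: "A * B = 1\<^sub>m n"
    unfolding B_def using mult_smult_distrib[OF cA cadj] adj_mat(2)[OF cA] d0 d_def
    by (auto intro!: eq_matI)
  have BA: "B * A = 1\<^sub>m n"
    unfolding B_def using mult_smult_assoc_mat[OF cadj cA] adj_mat(3)[OF cA] d0 d_def
    by (auto intro!: eq_matI)
  have invO: "inverse d \<in> intO v" using d0 vinv unfolding pw_def by auto
  have BO: "\<And>i j. i < n \<Longrightarrow> j < n \<Longrightarrow> B $$ (i, j) \<in> intO v"
  proof -
    fix i j assume ij: "i < n" "j < n"
    have "B $$ (i, j) = inverse d * ((-1) ^ (j + i) * det (mat_delete A j i))"
      unfolding B_def adj_mat_def cofactor_def using ij cA by simp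
    moreover have "det (mat_delete A j i) \<in> intO v"
      using ij by (intro mat_delete_O[OF cA]) (auto intro: J_O[OF A])
    moreover have "(-1::'a) ^ (j + i) \<in> intO v"
      by (rule m1_pow_O)
    ultimately show "B $$ (i, j) \<in> intO v"
      using invO by (metis O_mult)
  qed
  have low: "\<And>j. j < n \<Longrightarrow> \<forall>i. i < n \<longrightarrow> j < i \<longrightarrow> B $$ (i, j) \<in> pw v 1"
  proof -
    fix j show "j < n \<Longrightarrow> \<forall>i. i < n \<longrightarrow> j < i \<longrightarrow> B $$ (i, j) \<in> pw v 1"
    proof (induction j rule: less_induct)
      case (less j)
      show ?case
      proof (intro allI impI)
        fix i assume i: "i < n" "j < i"
        let ?f = "\<lambda>t. B $$ (i, t) * A $$ (t, j)"
        have "0 = (B * A) $$ (i, j)" using BA i less.prems by simp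
        also have "\<dots> = sum ?f {..<n}" using i less.prems by (intro mult_entry[OF cB cA])
        also have "\<dots> = ?f j + sum ?f ({..<n} - {j})" using less.prems by (intro sum.remove) auto
        finally have e: "?f j = - sum ?f ({..<n} - {j})" by (simp add: eq_neg_iff_add_eq_0)
        have "sum ?f ({..<n} - {j}) \<in> pw v 1"
        proof (rule pw_sum)
          fix t assume t: "t \<in> {..<n} - {j}"
          show "?f t \<in> pw v 1"
          proof (cases "t < j")
            case True
            then have "B $$ (i, t) \<in> pw v 1" using less.IH[of t] i less.prems by auto
            then show ?thesis using t less.prems by (intro pw_multO J_O[OF A]) auto
          next
            case False
            then have "j < t" using t by auto
            then show ?thesis using t less.prems i by (intro pw_Omult BO J_low[OF A]) auto
          qed
        qed
        then have "?f j \<in> pw v 1" using e pw_neg by simp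
        then have "?f j * inverse (A $$ (j, j)) \<in> pw v 1"
          using J_diag_unit[OF A less.prems] pw_multO by blast
        moreover have "B $$ (i, j) * A $$ (j, j) * inverse (A $$ (j, j)) = B $$ (i, j)"
          using J_diag_unit[OF A less.prems] by (simp add: mult.assoc)
        ultimately show "B $$ (i, j) \<in> pw v 1" by simp
      qed
    qed
  qed
  have dB: "det A * det B = 1" using det_mult[OF cA cB] AB by simp
  have "B \<in> iwahoriJ n v"
  proof (rule JI[OF cB])
    show dB0: "det B \<noteq> 0" using dB by auto
    show "v (det B) = 0" using dB vmult[of "det A" "det B"] d0 d_def v1 dB0 by auto
  qed (use BO low in auto)
  then show ?thesis using AB BA by blast
qed

definition coset :: "nat \<Rightarrow> 'a mat \<Rightarrow> 'a mat set" where
  "coset n X = {X * b | b. b \<in> iwahoriJ n v}"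

lemma coset_mult:
  assumes X: "X \<in> carrier_mat n n" and B: "B \<in> iwahoriJ n v"
  shows "coset n (X * B) = coset n X"
proof
  have cB: "B \<in> carrier_mat n n" using J_carrier[OF B] .
  show "coset n (X * B) \<subseteq> coset n X"
  proof
    fix Y assume "Y \<in> coset n (X * B)"
    then obtain b where b: "b \<in> iwahoriJ n v" "Y = X * B * b" unfolding coset_def by auto
    then have "Y = X * (B * b)" using X cB J_carrier[OF b(1)] by simp
    then show "Y \<in> coset n X" unfolding coset_def using J_mult[OF B b(1)] by auto
  qed
  show "coset n X \<subseteq> coset n (X * B)"
  proof
    fix Y assume "Y \<in> coset n X"
    then obtain b where b: "b \<in> iwahoriJ n v" "Y = X * b" unfolding coset_def by auto
    obtain B' where B': "B' \<in> iwahoriJ n v" "B * B' = 1\<^sub>m n" using J_inv[OF B] by blast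
    have cB': "B' \<in> carrier_mat n n" using J_carrier[OF B'(1)] .
    have "X * B * (B' * b) = X * (B * B') * b" using X cB cB' J_carrier[OF b(1)]
      by (simp add: assoc_mult_mat[of _ n n _ n _ n])
    also have "\<dots> = Y" using B'(2) b X by simp
    finally show "Y \<in> coset n (X * B)" unfolding coset_def using J_mult[OF B'(1) b(1)] by force
  qed
qed

lemma in_own_coset: "X \<in> carrier_mat n n \<Longrightarrow> X \<in> coset n X"
  unfolding coset_def using one_J by force

end




context valf begin

definition rrel :: "('a \<times> 'a) set" where
  "rrel = {(x, y). x \<in> intO v \<and> y \<in> intO v \<and> x - y \<in> pw v 1}"

definition reps :: "'a set" where
  "reps = (\<lambda>C. SOME y. y \<in> C) ` residue_classes v"

lemma rc_def: "residue_classes v = intO v // rrel"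
  unfolding residue_classes_def rrel_def by simp

lemma rrel_equiv: "equiv (intO v) rrel"
proof (rule equivI)
  show "refl_on (intO v) rrel" unfolding refl_on_def rrel_def by auto
  show "sym rrel" unfolding sym_def rrel_def using pw_neg by fastforce
  show "trans rrel" unfolding trans_def rrel_def using pw_add by fastforce
qed (auto simp: rrel_def)

lemma classes_finite: "finite (residue_classes v)"
  using nl unfolding nonarch_local_field_def by blast

lemma some_in: "C \<in> residue_classes v \<Longrightarrow> (SOME y. y \<in> C) \<in> C"
  using in_quotient_imp_non_empty[OF rrel_equiv] rc_def by (metis ex_in_conv someI_ex)

lemma class_sub: "C \<in> residue_classes v \<Longrightarrow> C \<subseteq> intO v"
  using rc_def by (metis Union_quotient rrel_equiv Union_upper)

lemma reps_O: "r \<in> reps \<Longrightarrow> r \<in> intO v"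
  unfolding reps_def using some_in class_sub by blast

lemma reps_ex: "x \<in> intO v \<Longrightarrow> \<exists>r\<in>reps. x - r \<in> pw v 1"
proof -
  assume x: "x \<in> intO v"
  let ?C = "rrel `` {x}"
  have C: "?C \<in> residue_classes v" using x rc_def by (simp add: quotientI)
  have "(SOME y. y \<in> ?C) \<in> ?C" using some_in[OF C] .
  then have "x - (SOME y. y \<in> ?C) \<in> pw v 1" unfolding rrel_def by auto
  moreover have "(SOME y. y \<in> ?C) \<in> reps" unfolding reps_def using C by blast
  ultimately show ?thesis by blast
qed

lemma reps_dist: "r \<in> reps \<Longrightarrow> r' \<in> reps \<Longrightarrow> r - r' \<in> pw v 1 \<Longrightarrow> r = r'"
proof -
  assume r: "r \<in> reps" and r': "r' \<in> reps" and d: "r - r' \<in> pw v 1"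
  obtain C where C: "C \<in> residue_classes v" "r = (SOME y. y \<in> C)" using r reps_def by auto
  obtain C' where C': "C' \<in> residue_classes v" "r' = (SOME y. y \<in> C')" using r' reps_def by auto
  have "(r, r') \<in> rrel" unfolding rrel_def using d reps_O r r' by auto
  then have "C = C'" using quotient_eqI[OF rrel_equiv, of C C' r r'] C C' some_in rc_def by auto
  then show "r = r'" using C C' by simp
qed

lemma reps_inj: "inj_on (\<lambda>C. SOME y. y \<in> C) (residue_classes v)"
proof (rule inj_onI)
  fix C C' assume C: "C \<in> residue_classes v" and C': "C' \<in> residue_classes v"
    and e: "(SOME y. y \<in> C) = (SOME y. y \<in> C')"
  have "(SOME y. y \<in> C, SOME y. y \<in> C') \<in> rrel"
    using e some_in[OF C] class_sub[OF C] unfolding rrel_def by auto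
  then show "C = C'" using quotient_eqI[OF rrel_equiv, of C C'] C C' some_in rc_def by auto
qed

lemma card_reps: "card reps = resq v"
  unfolding reps_def resq_def using card_image[OF reps_inj] .

lemma finite_reps: "finite reps"
  unfolding reps_def using classes_finite by simp

lemma elm_J: "p < q \<Longrightarrow> q < n \<Longrightarrow> c \<in> intO v \<Longrightarrow> elm n p q c \<in> iwahoriJ n v"
  by (rule JI) (auto simp: elm_det v1 intro: pw_add)

end

locale hk = valf v for v :: "'a::field \<Rightarrow> int" +
  fixes n :: nat and pi0 :: 'a and \<psi> :: "'a \<Rightarrow> complex" and W :: "'a mat \<Rightarrow> complex" and \<epsilon> :: complex
  assumes n1: "n \<ge> 1"
    and pi0: "pi0 \<noteq> 0" and vpi0: "v pi0 = 1"
    and psi: "unram_char v \<psi>"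
    and whit: "\<forall>u\<in>unipN n. \<forall>g\<in>GL n. W (u * g) = psiN n \<psi> u * W g"
    and fixJ: "fixed_by n (iwahoriJ n v) W"
    and W1: "W (1\<^sub>m n) = 1"
    and cent: "\<forall>z\<in>centre n. \<forall>g\<in>GL n. W (z * g) = W g"
    and heck_s: "\<forall>i. i + 1 < n \<longrightarrow> (\<forall>g\<in>GL n. hecke n v (sperm n i) W g = - W g)"
    and heck_u: "\<forall>g\<in>GL n. hecke n v (umat n pi0) W g = \<epsilon> * W g"
    and eps: "\<epsilon> ^ n = 1"
begin

lemma W_J: "g \<in> GL n \<Longrightarrow> h \<in> iwahoriJ n v \<Longrightarrow> W (g * h) = W g"
  using fixJ unfolding fixed_by_def by blast

lemma psi_O: "x \<in> intO v \<Longrightarrow> \<psi> x = 1"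
  using psi unfolding unram_char_def by blast

lemma W_elm:
  assumes "p < q" "q < n" "c \<in> intO v" "g \<in> GL n"
  shows "W (elm n p q c * g) = W g"
proof -
  have "W (elm n p q c * g) = psiN n \<psi> (elm n p q c) * W g"
    using whit elm_unipN[OF assms(1)] assms(4) by blast
  moreover have "(\<Sum>i<n - 1. elm n p q c $$ (i, i + 1)) \<in> intO v"
    using assms(3) by (intro pw_sum) auto
  ultimately show ?thesis unfolding psiN_def using psi_O by simp
qed

end




definition sig' :: "nat \<Rightarrow> nat \<Rightarrow> nat" where
  "sig' n b = (if b = n - 1 then 0 else Suc b)"

context hk begin

abbreviation "J \<equiv> iwahoriJ n v"
abbreviation "uu \<equiv> umat n pi0"
definition "uinv = mmat n (\<lambda>b. if b = n - 1 then inverse pi0 else 1) (sig' n)"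

lemma mult_carrier_n[simp]: "(A::'a mat) \<in> carrier_mat n n \<Longrightarrow> B \<in> carrier_mat n n \<Longrightarrow> A * B \<in> carrier_mat n n"
  by simp

lemma left_one_n[simp]: "(A::'a mat) \<in> carrier_mat n n \<Longrightarrow> 1\<^sub>m n * A = A"
  by (rule left_mult_one_mat)

lemma right_one_n[simp]: "(A::'a mat) \<in> carrier_mat n n \<Longrightarrow> A * 1\<^sub>m n = A"
  by (rule right_mult_one_mat)

lemma assoc_n[simp]: "(A::'a mat) \<in> carrier_mat n n \<Longrightarrow> B \<in> carrier_mat n n \<Longrightarrow> C \<in> carrier_mat n n \<Longrightarrow>
  A * B * C = A * (B * C)"
  by (rule assoc_mult_mat) auto

lemma sperm_carrier[simp]: "sperm n i \<in> carrier_mat n n"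
  unfolding sperm_def by simp
lemma umat_carrier[simp]: "umat n pi0 \<in> carrier_mat n n"
  unfolding umat_def by simp
lemma uinv_carrier[simp]: "uinv \<in> carrier_mat n n"
  unfolding uinv_def by simp

lemma sperm_GL: "Suc i < n \<Longrightarrow> sperm n i \<in> GL n"
  unfolding sperm_mono by (rule mono_GL[OF swp_bij]) auto

lemma ss: "Suc i < n \<Longrightarrow> sperm n i * sperm n i = 1\<^sub>m n"
  unfolding sperm_mono by (subst mono_mult) (auto simp: swp_lt intro!: mono_id_one)

lemma ss_right: "Suc i < n \<Longrightarrow> X \<in> carrier_mat n n \<Longrightarrow> sperm n i * (sperm n i * X) = X"
proof -
  assume i: "Suc i < n" and X: "X \<in> carrier_mat n n"
  have "sperm n i * sperm n i * X = sperm n i * (sperm n i * X)"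
    using X by (intro assoc_mult_mat[of _ n n _ n _ n]) auto
  then have "sperm n i * (sperm n i * X) = sperm n i * sperm n i * X" by simp
  also have "\<dots> = 1\<^sub>m n * X" unfolding ss[OF i] ..
  finally show ?thesis using X by simp
qed

lemma elm_right: "p \<noteq> q \<Longrightarrow> q < n \<Longrightarrow> X \<in> carrier_mat n n \<Longrightarrow> elm n p q c * (elm n p q d * X) = elm n p q (c + d) * X"
proof -
  assume pq: "p \<noteq> q" "q < n" and X: "X \<in> carrier_mat n n"
  have "elm n p q c * elm n p q d * X = elm n p q c * (elm n p q d * X)"
    using X by (intro assoc_mult_mat[of _ n n _ n _ n]) auto
  then have "elm n p q c * (elm n p q d * X) = elm n p q c * elm n p q d * X" by simp
  also have "\<dots> = elm n p q (c + d) * X" unfolding elm_inv[OF pq, of c d] ..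
  finally show ?thesis .
qed

lemma conj_s:
  fixes X :: "'a mat"
  assumes X: "X \<in> carrier_mat n n" and i: "Suc i < n" and ab: "a < n" "b < n"
  shows "(sperm n i * (X * sperm n i)) $$ (a, b) = X $$ (swp i a, swp i b)"
proof -
  have inj: "inj_on (swp i) {..<n}" using swp_bij[OF i] bij_betw_imp_inj_on by blast
  have "sperm n i * (X * sperm n i) = sperm n i * X * sperm n i" using X by simp
  also have "\<dots> $$ (a, b) = (sperm n i * X) $$ (a, swp i b) * 1"
    unfolding sperm_mono using X ab i by (subst mult_mono_entry) (auto simp: swp_lt)
  also have "(sperm n i * X) $$ (a, swp i b) = 1 * X $$ (swp i a, swp i b)"
    unfolding sperm_mono using X ab i inj by (subst mono_mult_entry[where tz = "swp i a"]) (auto simp: swp_lt)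
  finally show ?thesis by simp
qed

lemma swp_order: "b < a \<Longrightarrow> \<not> (a = Suc i \<and> b = i) \<Longrightarrow> swp i b < swp i a"
  unfolding swp_def by auto

lemma sJs:
  assumes X: "X \<in> J" and i: "Suc i < n" and p: "X $$ (i, Suc i) \<in> pw v 1"
  shows "sperm n i * (X * sperm n i) \<in> J"
proof (rule JI)
  have cX: "X \<in> carrier_mat n n" using J_carrier[OF X] .
  show "sperm n i * (X * sperm n i) \<in> carrier_mat n n" using cX by simp
  have ds: "det (sperm n i) * det (sperm n i) = 1"
    using det_mult[of "sperm n i" n "sperm n i"] ss[OF i] by (metis det_one sperm_carrier)
  have "det (sperm n i * (X * sperm n i)) = det X * (det (sperm n i) * det (sperm n i))"
    using cX by (simp add: det_mult[of _ n])
  then have d: "det (sperm n i * (X * sperm n i)) = det X" using ds by (metis mult.right_neutral)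
  show "det (sperm n i * (X * sperm n i)) \<noteq> 0" "v (det (sperm n i * (X * sperm n i))) = 0"
    using d J_det[OF X] by auto
  fix a b
  show "a < n \<Longrightarrow> b < n \<Longrightarrow> (sperm n i * (X * sperm n i)) $$ (a, b) \<in> intO v"
    using conj_s[OF cX i] J_O[OF X] swp_lt[OF i] by simp
  assume ab: "a < n" "b < a"
  show "(sperm n i * (X * sperm n i)) $$ (a, b) \<in> pw v 1"
  proof (cases "a = Suc i \<and> b = i")
    case True
    then show ?thesis using conj_s[OF cX i] ab p by (simp add: swp_def)
  next
    case False
    then show ?thesis using conj_s[OF cX i] ab swp_order[OF ab(2) False] swp_lt[OF i]
      by (auto intro!: J_low[OF X])
  qed
qed

lemma fact_s:
  assumes A: "A \<in> J" and i: "Suc i < n"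
  shows "\<exists>r\<in>reps. \<exists>C\<in>J. A * sperm n i = elm n i (Suc i) r * sperm n i * C"
proof -
  have cA: "A \<in> carrier_mat n n" using J_carrier[OF A] .
  have u: "inverse (A $$ (Suc i, Suc i)) \<in> intO v" "A $$ (Suc i, Suc i) \<noteq> 0"
    using J_diag_unit[OF A i] by auto
  define x where "x = A $$ (i, Suc i) * inverse (A $$ (Suc i, Suc i))"
  have xO: "x \<in> intO v" unfolding x_def using u i by (intro O_mult J_O[OF A]) auto
  obtain r where r: "r \<in> reps" "x - r \<in> pw v 1" using reps_ex[OF xO] by blast
  have rO: "- r \<in> intO v" using reps_O[OF r(1)] pw_neg by blast
  define A' where "A' = elm n i (Suc i) (- r) * A"
  have A'J: "A' \<in> J" unfolding A'_def using i rO by (intro J_mult[OF elm_J A]) auto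
  have "A' $$ (i, Suc i) = A $$ (i, Suc i) + (- r) * A $$ (Suc i, Suc i)"
    unfolding A'_def using i cA by (subst elm_mult_entry) auto
  also have "\<dots> = (x - r) * A $$ (Suc i, Suc i)" unfolding x_def using u by (simp add: algebra_simps)
  finally have a'p: "A' $$ (i, Suc i) \<in> pw v 1"
    using r(2) J_O[OF A, of "Suc i" "Suc i"] i by (simp add: pw_multO)
  define C where "C = sperm n i * (A' * sperm n i)"
  have CJ: "C \<in> J" unfolding C_def using sJs[OF A'J i a'p] .
  have "elm n i (Suc i) r * sperm n i * C = elm n i (Suc i) r * (sperm n i * (sperm n i * (elm n i (Suc i) (- r) * (A * sperm n i))))"
    unfolding C_def A'_def using cA by simp
  also have "\<dots> = elm n i (Suc i) r * (elm n i (Suc i) (- r) * (A * sperm n i))"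
    using ss_right[OF i, of "elm n i (Suc i) (- r) * (A * sperm n i)"] cA by simp
  also have "\<dots> = A * sperm n i"
    using elm_right[of i "Suc i" "A * sperm n i" r "- r"] i cA by (simp add: elm_zero)
  finally show ?thesis using r(1) CJ by metis
qed

lemma coset_eq: "coset n X = {X * b | b. b \<in> J}"
  unfolding coset_def by simp

lemma left_cosets_s:
  assumes i: "Suc i < n"
  shows "left_cosets n v (sperm n i) = (\<lambda>r. coset n (elm n i (Suc i) r * sperm n i)) ` reps"
proof
  show "left_cosets n v (sperm n i) \<subseteq> (\<lambda>r. coset n (elm n i (Suc i) r * sperm n i)) ` reps"
  proof
    fix C assume "C \<in> left_cosets n v (sperm n i)"
    then obtain \<gamma> where g: "C = coset n \<gamma>" "\<gamma> \<in> double_coset n v (sperm n i)"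
      unfolding left_cosets_def coset_eq by blast
    then obtain a b where ab: "a \<in> J" "b \<in> J" "\<gamma> = a * sperm n i * b"
      unfolding double_coset_def by blast
    obtain r c where rc: "r \<in> reps" "c \<in> J" "a * sperm n i = elm n i (Suc i) r * sperm n i * c"
      using fact_s[OF ab(1) i] by blast
    have "C = coset n (a * sperm n i)" using g ab coset_mult[OF _ ab(2), of "a * sperm n i"] J_carrier[OF ab(1)] by simp
    also have "\<dots> = coset n (elm n i (Suc i) r * sperm n i)" using rc coset_mult[OF _ rc(2)] by simp
    finally show "C \<in> (\<lambda>r. coset n (elm n i (Suc i) r * sperm n i)) ` reps" using rc(1) by blast
  qed
  show "(\<lambda>r. coset n (elm n i (Suc i) r * sperm n i)) ` reps \<subseteq> left_cosets n v (sperm n i)"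
  proof
    fix C assume "C \<in> (\<lambda>r. coset n (elm n i (Suc i) r * sperm n i)) ` reps"
    then obtain r where r: "r \<in> reps" "C = coset n (elm n i (Suc i) r * sperm n i)" by blast
    have eJ: "elm n i (Suc i) r \<in> J" using i reps_O[OF r(1)] by (intro elm_J) auto
    have "elm n i (Suc i) r * sperm n i * 1\<^sub>m n \<in> double_coset n v (sperm n i)"
      unfolding double_coset_def using eJ one_J by blast
    moreover have "elm n i (Suc i) r * sperm n i * 1\<^sub>m n = elm n i (Suc i) r * sperm n i"
      by (rule right_mult_one_mat[of _ n]) simp
    ultimately show "C \<in> left_cosets n v (sperm n i)"
      unfolding left_cosets_def coset_eq[symmetric] using r(2) by auto
  qed
qed

lemma inj_cosets_s:
  assumes i: "Suc i < n"
  shows "inj_on (\<lambda>r. coset n (elm n i (Suc i) r * sperm n i)) reps"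
proof (rule inj_onI)
  fix r r' assume r: "r \<in> reps" and r': "r' \<in> reps"
    and e: "coset n (elm n i (Suc i) r * sperm n i) = coset n (elm n i (Suc i) r' * sperm n i)"
  have "elm n i (Suc i) r' * sperm n i \<in> coset n (elm n i (Suc i) r * sperm n i)"
    using e in_own_coset[of "elm n i (Suc i) r' * sperm n i"] by simp
  then obtain b where b: "b \<in> J" "elm n i (Suc i) r' * sperm n i = elm n i (Suc i) r * sperm n i * b"
    unfolding coset_eq by blast
  have cb: "b \<in> carrier_mat n n" using J_carrier[OF b(1)] .
  have "sperm n i * (elm n i (Suc i) (- r) * (elm n i (Suc i) r' * sperm n i))
      = sperm n i * (elm n i (Suc i) (- r) * (elm n i (Suc i) r * sperm n i * b))" using b(2) by simp
  also have "\<dots> = sperm n i * (elm n i (Suc i) (- r) * (elm n i (Suc i) r * (sperm n i * b)))"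
    using cb by simp
  also have "\<dots> = b" using elm_right[of i "Suc i" "sperm n i * b" "- r" r] i cb ss_right[OF i cb]
    by (simp add: elm_zero)
  finally have "b = sperm n i * (elm n i (Suc i) (r' - r) * sperm n i)"
    using elm_right[of i "Suc i" "sperm n i" "- r" r'] i by simp
  then have "b $$ (Suc i, i) = elm n i (Suc i) (r' - r) $$ (swp i (Suc i), swp i i)"
    using conj_s[OF elm_carrier i] i by simp
  also have "\<dots> = r' - r" using i by (simp add: swp_def)
  finally have "r' - r \<in> pw v 1" using J_low[OF b(1), of "Suc i" i] i by simp
  then show "r = r'" using reps_dist[OF r' r] by simp
qed

lemma hecke_s_eq:
  assumes i: "Suc i < n" and g: "g \<in> GL n"
  shows "hecke n v (sperm n i) W g = (\<Sum>r\<in>reps. W (g * (elm n i (Suc i) r * sperm n i)))"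
proof -
  have cg: "g \<in> carrier_mat n n" using g unfolding GL_def by simp
  have "hecke n v (sperm n i) W g = (\<Sum>C\<in>(\<lambda>r. coset n (elm n i (Suc i) r * sperm n i)) ` reps. W (g * (SOME \<gamma>. \<gamma> \<in> C)))"
    unfolding hecke_def left_cosets_s[OF i] ..
  also have "\<dots> = (\<Sum>r\<in>reps. W (g * (SOME \<gamma>. \<gamma> \<in> coset n (elm n i (Suc i) r * sperm n i))))"
    using sum.reindex[OF inj_cosets_s[OF i]] by simp
  also have "\<dots> = (\<Sum>r\<in>reps. W (g * (elm n i (Suc i) r * sperm n i)))"
  proof (rule sum.cong[OF refl])
    fix r assume r: "r \<in> reps"
    let ?X = "elm n i (Suc i) r * sperm n i"
    have "(SOME \<gamma>. \<gamma> \<in> coset n ?X) \<in> coset n ?X"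
      using in_own_coset[of ?X] by (metis elm_carrier mult_carrier_mat sperm_carrier someI_ex)
    then obtain b where b: "b \<in> J" "(SOME \<gamma>. \<gamma> \<in> coset n ?X) = ?X * b" unfolding coset_eq by blast
    have XG: "g * ?X \<in> GL n" using g i by (intro GL_mult elm_GL sperm_GL) auto
    have "W (g * (?X * b)) = W (g * ?X * b)" using cg J_carrier[OF b(1)] by simp
    also have "\<dots> = W (g * ?X)" using W_J[OF XG b(1)] .
    finally show "W (g * (SOME \<gamma>. \<gamma> \<in> coset n ?X)) = W (g * ?X)" using b(2) by simp
  qed
  finally show ?thesis .
qed

end




context hk begin

lemma sig_sig': "b < n \<Longrightarrow> sig n (sig' n b) = b"
  unfolding sig_def sig'_def using n1 by auto
lemma sig'_sig: "b < n \<Longrightarrow> sig' n (sig n b) = b"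
  unfolding sig_def sig'_def using n1 by auto
lemma sig'_lt: "b < n \<Longrightarrow> sig' n b < n"
  unfolding sig'_def using n1 by auto
lemma sig'_inj: "inj_on (sig' n) {..<n}"
  by (metis inj_on_inverseI lessThan_iff sig_sig')

lemma u_uinv: "uu * uinv = 1\<^sub>m n"
  unfolding umat_mono[OF n1] uinv_def
  by (subst mono_mult) (auto simp: sig'_lt sig_sig' pi0 intro!: mono_id_one, auto simp: sig'_def)

lemma uinv_u: "uinv * uu = 1\<^sub>m n"
  unfolding umat_mono[OF n1] uinv_def
  by (subst mono_mult) (auto simp: sig_lt[OF n1] sig'_sig pi0 intro!: mono_id_one, auto simp: sig_def pi0)

lemma u_right: "X \<in> carrier_mat n n \<Longrightarrow> uu * (uinv * X) = X"
proof -
  assume X: "X \<in> carrier_mat n n"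
  have "uu * uinv * X = uu * (uinv * X)"
    using X by (intro assoc_mult_mat[of _ n n _ n _ n]) auto
  then have "uu * (uinv * X) = uu * uinv * X" by simp
  also have "\<dots> = 1\<^sub>m n * X" unfolding u_uinv ..
  finally show ?thesis using X by simp
qed

lemma u_GL: "uu \<in> GL n"
  using GL_of_inverse[OF umat_carrier uinv_carrier u_uinv] .

lemma conj_u_entry:
  assumes X: "X \<in> carrier_mat n n" and ab: "a < n" "b < n"
  shows "(uinv * (X * uu)) $$ (a, b) =
     (if a = 0 then inverse pi0 else 1) * X $$ (sig n a, sig n b) * (if b = 0 then pi0 else 1)"
proof -
  have "uinv * (X * uu) = uinv * X * uu" using X by simp
  also have "\<dots> $$ (a, b) = (uinv * X) $$ (a, sig n b) * (if b = 0 then pi0 else 1)"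
    unfolding umat_mono[OF n1] using X ab by (subst mult_mono_entry) (auto simp: sig_lt[OF n1] uinv_def)
  also have "(uinv * X) $$ (a, sig n b) = (if sig n a = n - 1 then inverse pi0 else 1) * X $$ (sig n a, sig n b)"
    unfolding uinv_def using X ab sig'_inj by (subst mono_mult_entry[where tz = "sig n a"]) (auto simp: sig_lt[OF n1] sig'_sig)
  also have "(if sig n a = n - 1 then inverse pi0 else 1) = (if a = 0 then inverse pi0 else (1::'a))"
    using ab unfolding sig_def by auto
  finally show ?thesis by simp
qed

lemma inv_pi0: "inverse pi0 \<in> pw v (-1)"
  unfolding pw_def using vinv[OF pi0] vpi0 by auto

lemma pi0_p: "pi0 \<in> pw v 1"
  unfolding pw_def using vpi0 by auto

lemma conj_u_J:
  assumes A: "A \<in> J"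
  shows "uinv * (A * uu) \<in> J"
proof (rule JI)
  have cA: "A \<in> carrier_mat n n" using J_carrier[OF A] .
  show "uinv * (A * uu) \<in> carrier_mat n n" using cA by simp
  have "det (uinv * (A * uu)) = det A * (det uinv * det uu)"
    using cA by (simp add: det_mult[of _ n])
  also have "det uinv * det uu = 1" using det_mult[of uinv n uu] uinv_u by (metis det_one uinv_carrier umat_carrier)
  finally have d: "det (uinv * (A * uu)) = det A" by simp
  show "det (uinv * (A * uu)) \<noteq> 0" "v (det (uinv * (A * uu))) = 0"
    using d J_det[OF A] by auto
  have sl: "\<And>a. a < n \<Longrightarrow> sig n a < n" using sig_lt[OF n1] .
  fix a b
  show "a < n \<Longrightarrow> b < n \<Longrightarrow> (uinv * (A * uu)) $$ (a, b) \<in> intO v"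
  proof -
    assume ab: "a < n" "b < n"
    show ?thesis
    proof (cases "a = 0")
      case a0: True
      show ?thesis
      proof (cases "b = 0")
        case True
        have "(uinv * (A * uu)) $$ (a, b) = inverse pi0 * pi0 * A $$ (sig n a, sig n b)"
          using a0 True conj_u_entry[OF cA ab] by (simp add: algebra_simps)
        also have "\<dots> = A $$ (sig n a, sig n b)" using pi0 by simp
        finally show ?thesis using J_O[OF A] sl ab by simp
      next
        case False
        have "A $$ (sig n a, sig n b) \<in> pw v 1" using a0 False ab
          by (intro J_low[OF A]) (auto simp: sig_def)
        then have "inverse pi0 * A $$ (sig n a, sig n b) \<in> pw v (-1 + 1)"
          using pw_mult[OF inv_pi0] by blast
        then show ?thesis using a0 False conj_u_entry[OF cA ab] by simp
      qed
    next
      case a1: False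
      show ?thesis
      proof (cases "b = 0")
        case True
        then show ?thesis using a1 conj_u_entry[OF cA ab] ab pi0_p
          by (simp add: O_mult J_O[OF A] sl pw_mono)
      next
        case False
        then show ?thesis using a1 conj_u_entry[OF cA ab] ab by (simp add: J_O[OF A] sl)
      qed
    qed
  qed
  assume ab: "a < n" "b < a"
  then have a1: "a \<noteq> 0" by auto
  show "(uinv * (A * uu)) $$ (a, b) \<in> pw v 1"
  proof (cases "b = 0")
    case True
    then show ?thesis using a1 conj_u_entry[OF cA, of a b] ab pi0_p J_O[OF A, of "sig n a" "sig n b"] sl
      by (simp add: pw_Omult)
  next
    case False
    then show ?thesis using a1 conj_u_entry[OF cA, of a b] ab
      by (simp add: sig_def, intro J_low[OF A]) auto
  qed
qed

lemma left_cosets_u: "left_cosets n v uu = {coset n uu}"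
proof
  show "left_cosets n v uu \<subseteq> {coset n uu}"
  proof
    fix C assume "C \<in> left_cosets n v uu"
    then obtain \<gamma> where g: "C = coset n \<gamma>" "\<gamma> \<in> double_coset n v uu"
      unfolding left_cosets_def coset_eq by blast
    then obtain a b where ab: "a \<in> J" "b \<in> J" "\<gamma> = a * uu * b"
      unfolding double_coset_def by blast
    have ca: "a \<in> carrier_mat n n" using J_carrier[OF ab(1)] .
    have "C = coset n (a * uu)" using g ab coset_mult[OF _ ab(2), of "a * uu"] ca by simp
    also have "a * uu = uu * (uinv * (a * uu))" using u_right ca by simp
    also have "coset n \<dots> = coset n uu" using coset_mult[OF umat_carrier conj_u_J[OF ab(1)]] .
    finally show "C \<in> {coset n uu}" by simp
  qed
  have "uu * 1\<^sub>m n * 1\<^sub>m n \<in> double_coset n v uu"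
  proof -
    have "1\<^sub>m n * uu * 1\<^sub>m n \<in> double_coset n v uu" unfolding double_coset_def using one_J by blast
    then show ?thesis by simp
  qed
  then show "{coset n uu} \<subseteq> left_cosets n v uu"
    unfolding left_cosets_def coset_eq[symmetric] by force
qed

lemma hecke_u_eq:
  assumes g: "g \<in> GL n"
  shows "hecke n v uu W g = W (g * uu)"
proof -
  have cg: "g \<in> carrier_mat n n" using g unfolding GL_def by simp
  have "hecke n v uu W g = W (g * (SOME \<gamma>. \<gamma> \<in> coset n uu))"
    unfolding hecke_def left_cosets_u by simp
  moreover have "(SOME \<gamma>. \<gamma> \<in> coset n uu) \<in> coset n uu"
    using in_own_coset[of uu] by (metis umat_carrier someI_ex)
  then obtain b where b: "b \<in> J" "(SOME \<gamma>. \<gamma> \<in> coset n uu) = uu * b" unfolding coset_eq by blast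
  moreover have "W (g * (uu * b)) = W (g * uu)"
    using W_J[OF GL_mult[OF g u_GL] b(1)] cg J_carrier[OF b(1)] by simp
  ultimately show ?thesis by simp
qed

end




definition Acyc :: "nat \<Rightarrow> nat \<Rightarrow> nat \<Rightarrow> nat" where
  "Acyc j m b = (if b = j + m then j else if j \<le> b \<and> b < j + m then b + 1 else b)"
definition Bcyc :: "nat \<Rightarrow> nat \<Rightarrow> nat \<Rightarrow> nat" where
  "Bcyc j m b = (if b = j - m then j else if j - m < b \<and> b \<le> j then b - 1 else b)"

lemma Acyc0: "Acyc j 0 = id"
  unfolding Acyc_def by auto
lemma Bcyc0: "Bcyc j 0 = id"
  unfolding Bcyc_def by auto
lemma Acyc_step: "Acyc j (Suc m) = Acyc j m \<circ> swp (j + m)"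
proof (rule ext)
  fix b
  show "Acyc j (Suc m) b = (Acyc j m \<circ> swp (j + m)) b"
    unfolding Acyc_def swp_def comp_def
    by (cases "b = j + m"; cases "b = Suc (j + m)") auto
qed
lemma Bcyc_step:
  assumes "Suc m \<le> j"
  shows "Bcyc j (Suc m) = Bcyc j m \<circ> swp (j - Suc m)"
proof (rule ext)
  fix b
  have h: "Suc (j - Suc m) = j - m" using assms by simp
  show "Bcyc j (Suc m) b = (Bcyc j m \<circ> swp (j - Suc m)) b"
    unfolding Bcyc_def swp_def comp_def h using assms
    by (cases "b = j - Suc m"; cases "b = j - m") auto
qed

lemma Acyc_bij: "j + m < n \<Longrightarrow> bij_betw (Acyc j m) {..<n} {..<n}"
proof (induction m)
  case 0 then show ?case by (simp add: Acyc0 bij_betw_def)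
next
  case (Suc m)
  have b1: "bij_betw (Acyc j m) {..<n} {..<n}" using Suc.IH Suc.prems by simp
  have b2: "bij_betw (swp (j + m)) {..<n} {..<n}" using Suc.prems by (intro swp_bij) simp
  show ?case unfolding Acyc_step using bij_betw_trans[OF b2 b1] .
qed

lemma Bcyc_bij: "m \<le> j \<Longrightarrow> j < n \<Longrightarrow> bij_betw (Bcyc j m) {..<n} {..<n}"
proof (induction m)
  case 0 then show ?case by (simp add: Bcyc0 bij_betw_def)
next
  case (Suc m)
  have b1: "bij_betw (Bcyc j m) {..<n} {..<n}" using Suc.IH Suc.prems by simp
  have b2: "bij_betw (swp (j - Suc m)) {..<n} {..<n}" using Suc.prems by (intro swp_bij) simp
  show ?case unfolding Bcyc_step[OF Suc.prems(1)] using bij_betw_trans[OF b2 b1] .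
qed

definition domi :: "nat \<Rightarrow> (nat \<Rightarrow> int) \<Rightarrow> bool" where
  "domi n \<mu> \<longleftrightarrow> (\<forall>a b. a \<le> b \<longrightarrow> b < n \<longrightarrow> \<mu> b \<le> \<mu> a)"

context hk begin

definition Dm :: "(nat \<Rightarrow> int) \<Rightarrow> (nat \<Rightarrow> nat) \<Rightarrow> 'a mat" where
  "Dm la \<pi> = mmat n (\<lambda>b. pi0 powi la (\<pi> b)) \<pi>"

lemma Dm_carrier[simp]: "Dm la \<pi> \<in> carrier_mat n n"
  unfolding Dm_def by simp

lemma Dm_dims[simp]: "dim_row (Dm la \<pi>) = n" "dim_col (Dm la \<pi>) = n"
  unfolding Dm_def by simp_all

lemma Dm_GL: "bij_betw \<pi> {..<n} {..<n} \<Longrightarrow> Dm la \<pi> \<in> GL n"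
  unfolding Dm_def by (rule mono_GL) (auto simp: pi0)

lemma Dm_s: "Suc i < n \<Longrightarrow> Dm la \<pi> * sperm n i = Dm la (\<pi> \<circ> swp i)"
  unfolding Dm_def sperm_mono by (subst mono_mult) (auto simp: swp_lt comp_def)

lemma Dm_u:
  assumes bij: "bij_betw \<pi> {..<n} {..<n}"
  shows "Dm la \<pi> * uu = Dm (\<lambda>x. la x + (if x = \<pi> (n - 1) then 1 else 0)) (\<pi> \<circ> sig n)"
  unfolding Dm_def umat_mono[OF n1]
proof (subst mono_mult)
  show "\<And>b. b < n \<Longrightarrow> sig n b < n" using sig_lt[OF n1] .
  have inj: "inj_on \<pi> {..<n}" using bij bij_betw_imp_inj_on by blast
  show "mmat n (\<lambda>b. pi0 powi la (\<pi> (sig n b)) * (if b = 0 then pi0 else 1)) (\<pi> \<circ> sig n) =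
    mmat n (\<lambda>b. pi0 powi (la ((\<pi> \<circ> sig n) b) + (if (\<pi> \<circ> sig n) b = \<pi> (n - 1) then 1 else 0))) (\<pi> \<circ> sig n)"
  proof (rule mono_cong)
    fix b assume b: "b < n"
    have "(\<pi> (sig n b) = \<pi> (n - 1)) = (b = 0)"
      using inj_on_eq_iff[OF inj, of "sig n b" "n - 1"] sig_lt[OF n1 b] n1 b by (auto simp: sig_def)
    then show "pi0 powi la (\<pi> (sig n b)) * (if b = 0 then pi0 else 1) =
      pi0 powi (la ((\<pi> \<circ> sig n) b) + (if (\<pi> \<circ> sig n) b = \<pi> (n - 1) then 1 else 0))"
      using pi0 by (auto simp: power_int_add)
  qed auto
qed

lemma Dm_elm:
  assumes bij: "bij_betw \<pi> {..<n} {..<n}" and i: "Suc i < n"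
  shows "Dm la \<pi> * elm n i (Suc i) r =
     elm n (\<pi> i) (\<pi> (Suc i)) (r * pi0 powi (la (\<pi> i) - la (\<pi> (Suc i)))) * Dm la \<pi>"
proof (rule eq_matI)
  have inj: "inj_on \<pi> {..<n}" using bij bij_betw_imp_inj_on by blast
  have lt: "\<And>b. b < n \<Longrightarrow> \<pi> b < n" using bij bij_betwE by blast
  fix a b assume "a < dim_row (elm n (\<pi> i) (\<pi> (Suc i)) (r * pi0 powi (la (\<pi> i) - la (\<pi> (Suc i)))) * Dm la \<pi>)"
    "b < dim_col (elm n (\<pi> i) (\<pi> (Suc i)) (r * pi0 powi (la (\<pi> i) - la (\<pi> (Suc i)))) * Dm la \<pi>)"
  then have ab: "a < n" "b < n" by auto
  have e1: "(Dm la \<pi> * elm n i (Suc i) r) $$ (a, b) = Dm la \<pi> $$ (a, b) + (if b = Suc i then Dm la \<pi> $$ (a, i) * r else 0)"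
    using ab i by (intro mult_elm_entry) auto
  have e2: "(elm n (\<pi> i) (\<pi> (Suc i)) (r * pi0 powi (la (\<pi> i) - la (\<pi> (Suc i)))) * Dm la \<pi>) $$ (a, b) =
     Dm la \<pi> $$ (a, b) + (if a = \<pi> i then (r * pi0 powi (la (\<pi> i) - la (\<pi> (Suc i)))) * Dm la \<pi> $$ (\<pi> (Suc i), b) else 0)"
    using ab i lt by (intro elm_mult_entry) auto
  have e3: "Dm la \<pi> $$ (\<pi> (Suc i), b) = (if b = Suc i then pi0 powi la (\<pi> (Suc i)) else 0)"
    unfolding Dm_def using ab i lt inj_on_eq_iff[OF inj, of "Suc i" b] by auto
  have e4: "Dm la \<pi> $$ (a, i) = (if a = \<pi> i then pi0 powi la (\<pi> i) else 0)"
    unfolding Dm_def using ab i by auto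
  have e5: "pi0 powi (la (\<pi> i) - la (\<pi> (Suc i))) * pi0 powi la (\<pi> (Suc i)) = pi0 powi la (\<pi> i)"
    using pi0 by (simp flip: power_int_add)
  show "(Dm la \<pi> * elm n i (Suc i) r) $$ (a, b) =
    (elm n (\<pi> i) (\<pi> (Suc i)) (r * pi0 powi (la (\<pi> i) - la (\<pi> (Suc i)))) * Dm la \<pi>) $$ (a, b)"
    unfolding e1 e2 e3 e4 using e5 by (auto simp: algebra_simps)
qed auto

abbreviation "Qc \<equiv> (of_nat (resq v) :: complex)"

lemma RS:
  assumes bij: "bij_betw \<pi> {..<n} {..<n}" and i: "Suc i < n"
    and lt: "\<pi> i < \<pi> (Suc i)" and le: "la (\<pi> (Suc i)) \<le> la (\<pi> i)"
  shows "Qc * W (Dm la (\<pi> \<circ> swp i)) = - W (Dm la \<pi>)"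
proof -
  have ltn: "\<And>b. b < n \<Longrightarrow> \<pi> b < n" using bij bij_betwE by blast
  have G: "Dm la \<pi> \<in> GL n" using Dm_GL[OF bij] .
  have G2: "Dm la \<pi> * sperm n i \<in> GL n" using GL_mult[OF G sperm_GL[OF i]] .
  have "- W (Dm la \<pi>) = hecke n v (sperm n i) W (Dm la \<pi>)" using heck_s i G by simp
  also have "\<dots> = (\<Sum>r\<in>reps. W (Dm la \<pi> * (elm n i (Suc i) r * sperm n i)))" using hecke_s_eq[OF i G] .
  also have "\<dots> = (\<Sum>r\<in>reps. W (Dm la \<pi> * sperm n i))"
  proof (rule sum.cong[OF refl])
    fix r assume r: "r \<in> reps"
    let ?c = "r * pi0 powi (la (\<pi> i) - la (\<pi> (Suc i)))"
    have p: "pi0 powi (la (\<pi> i) - la (\<pi> (Suc i))) \<in> pw v (la (\<pi> i) - la (\<pi> (Suc i)))"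
      by (rule powi_pw[OF pi0 vpi0])
    have z: "0 \<le> la (\<pi> i) - la (\<pi> (Suc i))" using le by simp
    have "pi0 powi (la (\<pi> i) - la (\<pi> (Suc i))) \<in> intO v" by (rule pw_mono[OF p z])
    then have cO: "?c \<in> intO v" using reps_O[OF r] O_mult by blast
    have "Dm la \<pi> * (elm n i (Suc i) r * sperm n i) = Dm la \<pi> * elm n i (Suc i) r * sperm n i"
      by (rule assoc_n[symmetric]) simp_all
    also have "\<dots> = elm n (\<pi> i) (\<pi> (Suc i)) ?c * Dm la \<pi> * sperm n i"
      by (simp only: Dm_elm[OF bij i])
    also have "\<dots> = elm n (\<pi> i) (\<pi> (Suc i)) ?c * (Dm la \<pi> * sperm n i)"
      by (rule assoc_n) simp_all
    finally have e: "Dm la \<pi> * (elm n i (Suc i) r * sperm n i) = elm n (\<pi> i) (\<pi> (Suc i)) ?c * (Dm la \<pi> * sperm n i)" .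
    have q: "\<pi> (Suc i) < n" using ltn i by simp
    show "W (Dm la \<pi> * (elm n i (Suc i) r * sperm n i)) = W (Dm la \<pi> * sperm n i)"
      unfolding e by (rule W_elm[OF lt q cO G2])
  qed
  also have "\<dots> = of_nat (card reps) * W (Dm la \<pi> * sperm n i)" by simp
  also have "\<dots> = Qc * W (Dm la (\<pi> \<circ> swp i))" unfolding card_reps Dm_s[OF i] ..
  finally show ?thesis by simp
qed

lemma RU:
  assumes bij: "bij_betw \<pi> {..<n} {..<n}"
  shows "W (Dm (\<lambda>x. la x + (if x = \<pi> (n - 1) then 1 else 0)) (\<pi> \<circ> sig n)) = \<epsilon> * W (Dm la \<pi>)"
  using heck_u hecke_u_eq[OF Dm_GL[OF bij]] Dm_u[OF bij] Dm_GL[OF bij] by simp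

lemma chain_up:
  assumes d: "domi n la"
  shows "j + m < n \<Longrightarrow> Qc ^ m * W (Dm la (Acyc j m)) = (-1) ^ m * W (Dm la id)"
proof (induction m)
  case 0 then show ?case by (simp add: Acyc0)
next
  case (Suc m)
  have bij: "bij_betw (Acyc j m) {..<n} {..<n}" using Acyc_bij Suc by simp
  have i: "Suc (j + m) < n" using Suc by simp
  have a1: "Acyc j m (j + m) = j" "Acyc j m (Suc (j + m)) = Suc (j + m)" unfolding Acyc_def by auto
  have h: "Qc * W (Dm la (Acyc j m \<circ> swp (j + m))) = - W (Dm la (Acyc j m))"
    using RS[OF bij i] a1 d i unfolding domi_def by simp
  have "Qc ^ Suc m * W (Dm la (Acyc j (Suc m))) = Qc ^ m * (Qc * W (Dm la (Acyc j m \<circ> swp (j + m))))"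
    unfolding Acyc_step by (simp add: mult_ac)
  also have "\<dots> = - (Qc ^ m * W (Dm la (Acyc j m)))" unfolding h by simp
  finally have "Qc ^ Suc m * W (Dm la (Acyc j (Suc m))) = - (Qc ^ m * W (Dm la (Acyc j m)))" .
  then show ?case using Suc by simp
qed

lemma chain_down:
  assumes d: "domi n \<mu>" and j: "j < n"
  shows "m \<le> j \<Longrightarrow> Qc ^ m * W (Dm \<mu> (Bcyc j m)) = (-1) ^ m * W (Dm \<mu> id)"
proof (induction m)
  case 0 then show ?case by (simp add: Bcyc0)
next
  case (Suc m)
  have bij: "bij_betw (Bcyc j m) {..<n} {..<n}" using Bcyc_bij Suc j by simp
  have i: "Suc (j - Suc m) < n" using Suc j by simp
  have a1: "Bcyc j m (j - Suc m) = j - Suc m" "Bcyc j m (Suc (j - Suc m)) = j"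
    unfolding Bcyc_def using Suc by auto
  have h: "Qc * W (Dm \<mu> (Bcyc j m \<circ> swp (j - Suc m))) = - W (Dm \<mu> (Bcyc j m))"
    using RS[OF bij i] a1 d i Suc j unfolding domi_def by simp
  have "Qc ^ Suc m * W (Dm \<mu> (Bcyc j (Suc m))) = Qc ^ m * (Qc * W (Dm \<mu> (Bcyc j m \<circ> swp (j - Suc m))))"
    unfolding Bcyc_step[OF Suc(2)] by (simp add: mult_ac)
  also have "\<dots> = - (Qc ^ m * W (Dm \<mu> (Bcyc j m)))" unfolding h by simp
  finally have "Qc ^ Suc m * W (Dm \<mu> (Bcyc j (Suc m))) = - (Qc ^ m * W (Dm \<mu> (Bcyc j m)))" .
  then show ?case using Suc by simp
qed

lemma key_step:
  assumes dl: "domi n la" and dm: "domi n (la(j := la j + 1))" and j: "j < n"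
  shows "Qc ^ (n - 1 - j) * (-1) ^ j * W (Dm (la(j := la j + 1)) id)
       = Qc ^ j * \<epsilon> * (-1) ^ (n - 1 - j) * W (Dm la id)"
proof -
  let ?\<mu> = "la(j := la j + 1)"
  let ?\<pi> = "Acyc j (n - 1 - j)"
  let ?\<rho> = "Bcyc j j"
  have bp: "bij_betw ?\<pi> {..<n} {..<n}" using Acyc_bij j by simp
  have pn: "?\<pi> (n - 1) = j" unfolding Acyc_def using j by auto
  have comp: "\<And>b. b < n \<Longrightarrow> (?\<pi> \<circ> sig n) b = ?\<rho> b"
    unfolding Acyc_def Bcyc_def sig_def using j by auto
  have mu: "(\<lambda>x. la x + (if x = ?\<pi> (n - 1) then 1 else 0)) = ?\<mu>"
    using pn by (auto simp: fun_eq_iff)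
  have "Dm ?\<mu> (?\<pi> \<circ> sig n) = Dm ?\<mu> ?\<rho>"
    unfolding Dm_def using comp by (intro mono_cong) auto
  then have U: "W (Dm ?\<mu> ?\<rho>) = \<epsilon> * W (Dm la ?\<pi>)" using RU[OF bp, of la] mu by simp
  have A: "Qc ^ (n - 1 - j) * W (Dm la ?\<pi>) = (-1) ^ (n - 1 - j) * W (Dm la id)"
    using chain_up[OF dl] j by simp
  have B: "Qc ^ j * W (Dm ?\<mu> ?\<rho>) = (-1) ^ j * W (Dm ?\<mu> id)"
    using chain_down[OF dm j] by simp
  have "Qc ^ (n - 1 - j) * ((-1) ^ j * W (Dm ?\<mu> id)) = Qc ^ (n - 1 - j) * (Qc ^ j * W (Dm ?\<mu> ?\<rho>))"
    using B by simp
  also have "\<dots> = Qc ^ j * \<epsilon> * (Qc ^ (n - 1 - j) * W (Dm la ?\<pi>))" using U by (simp add: algebra_simps)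
  also have "\<dots> = Qc ^ j * \<epsilon> * (-1) ^ (n - 1 - j) * W (Dm la id)" using A by simp
  finally show ?thesis by (simp add: algebra_simps)
qed

end




lemma prod_powi: "(x::real) \<noteq> 0 \<Longrightarrow> (\<Prod>i\<in>S. x powi f i) = x powi (\<Sum>i\<in>S. f i)"
  by (induction S rule: infinite_finite_induct) (auto simp: power_int_add)

lemma gauss_int: "2 * (\<Sum>i<n. int i) = int n * (int n - 1)"
  by (induction n) (auto simp: algebra_simps)

lemma sum_exp_zero: "(\<Sum>i<n. (int n - 1 - 2 * int i)) = 0"
proof -
  have "(\<Sum>i<n. (int n - 1 - 2 * int i)) = (\<Sum>i<n. (int n - 1)) - 2 * (\<Sum>i<n. int i)"
    by (simp add: sum_subtractf sum_distrib_left)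
  also have "\<dots> = 0" using gauss_int[of n] by simp
  finally show ?thesis .
qed

lemma all_eq_last:
  fixes \<mu> :: "nat \<Rightarrow> int"
  assumes "\<And>j. Suc j < n \<Longrightarrow> \<mu> j = \<mu> (Suc j)"
  shows "i < n \<Longrightarrow> \<mu> i = \<mu> (n - 1)"
proof (induction "n - 1 - i" arbitrary: i)
  case 0
  then have "i = n - 1" by arith
  then show ?case by simp
next
  case (Suc d)
  then have "Suc i < n" "d = n - 1 - Suc i" by auto
  then show ?case using Suc.hyps(1)[of "Suc i"] assms by simp
qed

lemma adj_mono_aux:
  fixes k :: "nat \<Rightarrow> int"
  assumes "\<forall>i. i + 1 < n \<longrightarrow> k (i + 1) \<le> k i"
  shows "a + d < n \<Longrightarrow> k (a + d) \<le> k a"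
proof (induction d)
  case 0 then show ?case by simp
next
  case (Suc d)
  then have "k (a + d) \<le> k a" by simp
  moreover have "k (a + Suc d) \<le> k (a + d)" using assms Suc.prems by (metis add_Suc_right Suc_eq_plus1)
  ultimately show ?case by simp
qed

lemma adj_domi:
  fixes k :: "nat \<Rightarrow> int"
  shows "(\<forall>i. i + 1 < n \<longrightarrow> k (i + 1) \<le> k i) \<Longrightarrow> domi n k"
  unfolding domi_def using adj_mono_aux by (metis le_add_diff_inverse)

context hk begin

lemma classes_ne: "residue_classes v \<noteq> {}"
  using rc_def by (metis empty_iff one_O quotientI)

lemma q_pos: "resq v > 0"
  unfolding resq_def using classes_finite classes_ne by (simp add: card_gt_0_iff)

abbreviation "Sm \<mu> \<equiv> (\<Sum>i<n. \<mu> i)"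
abbreviation "Em \<mu> \<equiv> (\<Sum>i<n. \<mu> i * (int n - 1 - 2 * int i))"

definition Tv :: "(nat \<Rightarrow> int) \<Rightarrow> complex" where
  "Tv \<mu> = \<epsilon> powi (\<Sum>i<n. \<mu> i) * (-1) powi ((int n - 1) * (\<Sum>i<n. \<mu> i))
           * complex_of_real (deltaB n v (diagpw n pi0 \<mu>))"

lemma deltaB_eq: "deltaB n v (diagpw n pi0 \<mu>) = real (resq v) powi (- Em \<mu>)"
proof -
  have q0: "real (resq v) \<noteq> 0" using q_pos by simp
  have "deltaB n v (diagpw n pi0 \<mu>) = (\<Prod>i<n. real (resq v) powi (- \<mu> i * (int n - 1 - 2 * int i)))"
    unfolding deltaB_def
  proof (rule prod.cong[OF refl])
    fix i assume i: "i \<in> {..<n}"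
    have "diagpw n pi0 \<mu> $$ (i, i) = pi0 powi \<mu> i" unfolding diagpw_def using i by simp
    moreover have "absv v (pi0 powi \<mu> i) = real (resq v) powi (- \<mu> i)"
      unfolding absv_def using pi0 v_powi[OF pi0] vpi0 by simp
    ultimately show "absv v (diagpw n pi0 \<mu> $$ (i, i)) powi (int n - 1 - 2 * int i) =
        real (resq v) powi (- \<mu> i * (int n - 1 - 2 * int i))"
      by (simp only: power_int_mult)
  qed
  also have "\<dots> = real (resq v) powi (\<Sum>i<n. - \<mu> i * (int n - 1 - 2 * int i))"
    using prod_powi[OF q0] .
  also have "(\<Sum>i<n. - \<mu> i * (int n - 1 - 2 * int i)) = - Em \<mu>"
    by (simp add: sum_negf)
  finally show ?thesis .
qed

lemma Qc0: "Qc \<noteq> 0" using q_pos by simp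
lemma eps0: "\<epsilon> \<noteq> 0" using eps n1 by (metis one_neq_zero power_0_left le_numeral_extra(2) not_one_le_zero zero_power) 

lemma Tv_alt: "Tv \<mu> = \<epsilon> powi Sm \<mu> * (-1) powi ((int n - 1) * Sm \<mu>) * Qc powi (- Em \<mu>)"
  unfolding Tv_def deltaB_eq by simp

lemma Tv_step:
  assumes j: "j < n"
  shows "Tv (\<mu>(j := \<mu> j + 1)) = Tv \<mu> * \<epsilon> * (-1) ^ (n - 1) * Qc powi (2 * int j + 1 - int n)"
proof -
  have fu: "\<mu>(j := \<mu> j + 1) = (\<lambda>i. \<mu> i + (if i = j then 1 else 0))" by (auto simp: fun_eq_iff)
  have S: "Sm (\<mu>(j := \<mu> j + 1)) = Sm \<mu> + 1" unfolding fu using j by (simp add: sum.distrib)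
  have E: "Em (\<mu>(j := \<mu> j + 1)) = Em \<mu> + (int n - 1 - 2 * int j)"
  proof -
    have "Em (\<mu>(j := \<mu> j + 1)) = (\<Sum>i<n. \<mu> i * (int n - 1 - 2 * int i) + (if i = j then (int n - 1 - 2 * int i) else 0))"
      unfolding fu by (intro sum.cong) (auto simp: algebra_simps)
    also have "\<dots> = Em \<mu> + (\<Sum>i<n. (if i = j then (int n - 1 - 2 * int i) else 0))"
      by (simp only: sum.distrib)
    also have "(\<Sum>i<n. (if i = j then (int n - 1 - 2 * int i) else 0)) = int n - 1 - 2 * int j"
      using j by simp
    finally show ?thesis .
  qed
  have m1: "(-1::complex) powi (int n - 1) = (-1) ^ (n - 1)"
    using n1 by (metis of_nat_1 of_nat_diff power_int_of_nat)
  have "Tv (\<mu>(j := \<mu> j + 1)) = \<epsilon> powi (Sm \<mu> + 1) * (-1) powi ((int n - 1) * Sm \<mu> + (int n - 1))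
      * Qc powi (- Em \<mu> + (2 * int j + 1 - int n))"
    unfolding Tv_alt S E by (simp add: algebra_simps)
  also have "\<dots> = (\<epsilon> powi Sm \<mu> * \<epsilon>) * ((-1) powi ((int n - 1) * Sm \<mu>) * (-1) ^ (n - 1))
      * (Qc powi (- Em \<mu>) * Qc powi (2 * int j + 1 - int n))"
  proof -
    have p1: "\<epsilon> powi (Sm \<mu> + 1) = \<epsilon> powi Sm \<mu> * \<epsilon>"
      using eps0 by (intro power_int_add_1) simp
    have p2: "(-1::complex) powi ((int n - 1) * Sm \<mu> + (int n - 1)) = (-1) powi ((int n - 1) * Sm \<mu>) * (-1) ^ (n - 1)"
      unfolding m1[symmetric] by (rule power_int_add) simp
    have p3: "Qc powi (- Em \<mu> + (2 * int j + 1 - int n)) = Qc powi (- Em \<mu>) * Qc powi (2 * int j + 1 - int n)"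
      using Qc0 by (rule power_int_add[OF disjI1])
    show ?thesis unfolding p1 p2 p3 ..
  qed
  also have "\<dots> = Tv \<mu> * \<epsilon> * (-1) ^ (n - 1) * Qc powi (2 * int j + 1 - int n)"
    unfolding Tv_alt by (simp add: algebra_simps)
  finally show ?thesis .
qed

lemma step_ok:
  assumes dl: "domi n la" and dm: "domi n (la(j := la j + 1))" and j: "j < n"
    and IH: "W (Dm la id) = Tv la"
  shows "W (Dm (la(j := la j + 1)) id) = Tv (la(j := la j + 1))"
proof -
  let ?m = "la(j := la j + 1)"
  have K: "Qc ^ (n - 1 - j) * (-1) ^ j * W (Dm ?m id) = Qc ^ j * \<epsilon> * (-1) ^ (n - 1 - j) * Tv la"
    using key_step[OF dl dm j] IH by simp
  have q: "Qc ^ (n - 1 - j) * Qc powi (2 * int j + 1 - int n) = Qc ^ j"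
  proof -
    have "Qc ^ (n - 1 - j) * Qc powi (2 * int j + 1 - int n) = Qc powi (int (n - 1 - j) + (2 * int j + 1 - int n))"
      using Qc0 by (simp add: power_int_add)
    also have "int (n - 1 - j) + (2 * int j + 1 - int n) = int j" using j by simp
    finally show ?thesis by simp
  qed
  have s: "(-1::complex) ^ j * (-1) ^ (n - 1) = (-1) ^ (n - 1 - j)"
  proof -
    have "(-1::complex) ^ j * (-1) ^ (n - 1) = (-1) ^ (j + (n - 1))" by (simp only: power_add)
    also have "j + (n - 1) = (n - 1 - j) + 2 * j" using j by simp
    also have "(-1::complex) ^ ((n - 1 - j) + 2 * j) = (-1) ^ (n - 1 - j)" by (simp add: power_add power_mult)
    finally show ?thesis .
  qed
  have T: "Qc ^ (n - 1 - j) * (-1) ^ j * Tv ?m = Qc ^ j * \<epsilon> * (-1) ^ (n - 1 - j) * Tv la"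
  proof -
    have "Qc ^ (n - 1 - j) * (-1) ^ j * Tv ?m =
       Tv la * \<epsilon> * (Qc ^ (n - 1 - j) * Qc powi (2 * int j + 1 - int n)) * ((-1) ^ j * (-1) ^ (n - 1))"
      unfolding Tv_step[OF j] by (simp add: algebra_simps)
    also have "\<dots> = Qc ^ j * \<epsilon> * (-1) ^ (n - 1 - j) * Tv la" unfolding q s by (simp add: algebra_simps)
    finally show ?thesis .
  qed
  have nz: "Qc ^ (n - 1 - j) * (-1) ^ j \<noteq> 0" using Qc0 by simp
  show ?thesis using K T nz by (metis mult_left_cancel)
qed

lemma base_ok:
  assumes c: "\<And>i. i < n \<Longrightarrow> \<mu> i = c"
  shows "W (Dm \<mu> id) = Tv \<mu>"
proof -
  have D: "Dm \<mu> id = (pi0 powi c \<cdot>\<^sub>m 1\<^sub>m n) * 1\<^sub>m n"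
    unfolding Dm_def by (rule eq_matI) (auto simp: c)
  have Z: "pi0 powi c \<cdot>\<^sub>m 1\<^sub>m n \<in> centre n" unfolding centre_def using pi0 by auto
  have "W ((pi0 powi c \<cdot>\<^sub>m 1\<^sub>m n) * 1\<^sub>m n) = W (1\<^sub>m n)" using cent Z one_GL by blast
  then have W: "W (Dm \<mu> id) = 1" unfolding D W1 .
  have S: "Sm \<mu> = int n * c" using c by simp
  have E: "Em \<mu> = 0"
  proof -
    have "Em \<mu> = c * (\<Sum>i<n. (int n - 1 - 2 * int i))" using c by (simp add: sum_distrib_left)
    then show ?thesis using sum_exp_zero by simp
  qed
  have e1: "\<epsilon> powi (int n * c) = 1" by (simp add: power_int_mult eps)
  have ev: "even ((n - 1) * n)" by simp
  have e2: "(-1::complex) powi ((int n - 1) * (int n * c)) = 1"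
  proof -
    have "(int n - 1) * (int n * c) = int ((n - 1) * n) * c" using n1 by (simp add: of_nat_diff)
    then have "(-1::complex) powi ((int n - 1) * (int n * c)) = ((-1) powi (int ((n - 1) * n))) powi c"
      by (simp only: power_int_mult)
    also have "(-1::complex) powi (int ((n - 1) * n)) = 1"
      using ev by (simp only: power_int_of_nat neg_one_even_power)
    finally show ?thesis by simp
  qed
  have "Tv \<mu> = 1" unfolding Tv_alt S E using e1 e2 by simp
  then show ?thesis using W by simp
qed

definition Mm :: "(nat \<Rightarrow> int) \<Rightarrow> nat" where
  "Mm \<mu> = (\<Sum>i<n. nat (\<mu> i - \<mu> (n - 1)))"

lemma dom_ok_aux: "\<forall>\<mu>. domi n \<mu> \<longrightarrow> Mm \<mu> = m \<longrightarrow> W (Dm \<mu> id) = Tv \<mu>"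
proof (induction m)
  case 0
  show ?case
  proof (intro allI impI)
    fix \<mu> assume d: "domi n \<mu>" and M: "Mm \<mu> = 0"
    have "\<And>i. i < n \<Longrightarrow> \<mu> i = \<mu> (n - 1)"
    proof -
      fix i assume i: "i < n"
      have "nat (\<mu> i - \<mu> (n - 1)) = 0" using M i unfolding Mm_def by simp
      moreover have "\<mu> (n - 1) \<le> \<mu> i" using d i n1 unfolding domi_def by auto
      ultimately show "\<mu> i = \<mu> (n - 1)" by simp
    qed
    then show "W (Dm \<mu> id) = Tv \<mu>" by (rule base_ok)
  qed
next
  case (Suc m)
  show ?case
  proof (intro allI impI)
    fix \<mu> assume d: "domi n \<mu>" and M: "Mm \<mu> = Suc m"
    have "\<exists>j. Suc j < n \<and> \<mu> (Suc j) < \<mu> j"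
    proof (rule ccontr)
      assume nex: "\<not> (\<exists>j. Suc j < n \<and> \<mu> (Suc j) < \<mu> j)"
      have eqs: "\<And>j. Suc j < n \<Longrightarrow> \<mu> j = \<mu> (Suc j)"
      proof -
        fix j assume j: "Suc j < n"
        have "\<mu> (Suc j) \<le> \<mu> j" using d j unfolding domi_def by auto
        moreover have "\<not> \<mu> (Suc j) < \<mu> j" using nex j by blast
        ultimately show "\<mu> j = \<mu> (Suc j)" by simp
      qed
      have ae: "\<And>i. i < n \<Longrightarrow> \<mu> i = \<mu> (n - 1)" using all_eq_last[where n = n and \<mu> = \<mu>, OF eqs] .
      have "Mm \<mu> = 0" unfolding Mm_def
      proof (rule sum.neutral)
        show "\<forall>x\<in>{..<n}. nat (\<mu> x - \<mu> (n - 1)) = 0"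
        proof
          fix x assume "x \<in> {..<n}"
          then have "\<mu> x = \<mu> (n - 1)" using ae by blast
          then show "nat (\<mu> x - \<mu> (n - 1)) = 0" by simp
        qed
      qed
      then show False using M by simp
    qed
    then obtain j where j: "Suc j < n" "\<mu> (Suc j) < \<mu> j" by blast
    define la where "la = \<mu>(j := \<mu> j - 1)"
    have mu: "\<mu> = la(j := la j + 1)" unfolding la_def by auto
    have dl: "domi n la" unfolding domi_def
    proof (intro allI impI)
      fix a b assume ab: "a \<le> b" "b < n"
      show "la b \<le> la a"
      proof (cases "b = j")
        case True
        have "\<mu> b \<le> \<mu> a" using d ab unfolding domi_def by blast
        then show ?thesis using True unfolding la_def by auto
      next
        case False
        then have "la b = \<mu> b" unfolding la_def by simp
        show ?thesis
        proof (cases "a = j")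
          case True
          then have "b \<ge> Suc j" using ab False by simp
          then have "\<mu> b \<le> \<mu> (Suc j)" using d ab unfolding domi_def by blast
          then show ?thesis using True False j unfolding la_def by simp
        next
          case False
          have "\<mu> b \<le> \<mu> a" using d ab unfolding domi_def by blast
          then show ?thesis using False \<open>b \<noteq> j\<close> unfolding la_def by auto
        qed
      qed
    qed
    have last: "la (n - 1) = \<mu> (n - 1)" unfolding la_def using j by auto
    have jn: "\<mu> (n - 1) \<le> \<mu> (Suc j)" using d j unfolding domi_def by auto
    have Ml: "Mm la = m"
    proof -
      have fin: "finite {..<n}" "j \<in> {..<n}" using j by auto
      have R: "(\<Sum>i\<in>{..<n} - {j}. nat (la i - la (n - 1))) = (\<Sum>i\<in>{..<n} - {j}. nat (\<mu> i - \<mu> (n - 1)))"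
        unfolding last by (rule sum.cong) (auto simp: la_def)
      have "Mm \<mu> = nat (\<mu> j - \<mu> (n - 1)) + (\<Sum>i\<in>{..<n} - {j}. nat (\<mu> i - \<mu> (n - 1)))"
        unfolding Mm_def using sum.remove[OF fin] by simp
      moreover have "Mm la = nat (la j - la (n - 1)) + (\<Sum>i\<in>{..<n} - {j}. nat (la i - la (n - 1)))"
        unfolding Mm_def using sum.remove[OF fin] by simp
      moreover have "nat (la j - la (n - 1)) + 1 = nat (\<mu> j - \<mu> (n - 1))"
        unfolding last using j jn unfolding la_def by simp
      ultimately show ?thesis using M R by simp
    qed
    have IH: "W (Dm la id) = Tv la" using Suc.IH dl Ml by blast
    have dm: "domi n (la(j := la j + 1))" using d mu by simp
    show "W (Dm \<mu> id) = Tv \<mu>" using step_ok[OF dl dm _ IH] j mu by simp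
  qed
qed

lemma dom_ok: "domi n \<mu> \<Longrightarrow> W (Dm \<mu> id) = Tv \<mu>"
  using dom_ok_aux by blast

lemma Dm_diag: "Dm k id = diagpw n pi0 k"
  unfolding Dm_def diagpw_mono by simp

lemma support:
  assumes i: "Suc i < n" and lt: "k i < k (Suc i)"
  shows "W (diagpw n pi0 k) = 0"
proof -
  obtain x where x: "x \<in> pw v (-1)" "\<psi> x \<noteq> 1" using psi unfolding unram_char_def by blast
  define r where "r = x * pi0 powi (k (Suc i) - k i)"
  have "r \<in> pw v (-1 + (k (Suc i) - k i))" unfolding r_def by (rule pw_mult[OF x(1) powi_pw[OF pi0 vpi0, of "k (Suc i) - k i"]])
  moreover have "0 \<le> -1 + (k (Suc i) - k i)" using lt by simp
  ultimately have rO: "r \<in> intO v" by (rule pw_mono)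
  have rx: "r * pi0 powi (k i - k (Suc i)) = x"
  proof -
    have "pi0 powi (k (Suc i) - k i) * pi0 powi (k i - k (Suc i)) = pi0 powi ((k (Suc i) - k i) + (k i - k (Suc i)))"
      using pi0 by (intro power_int_add[symmetric]) simp
    also have "\<dots> = 1" by simp
    finally show ?thesis unfolding r_def by (simp add: mult.assoc)
  qed
  have bij: "bij_betw id {..<n} {..<n}" by simp
  have G: "Dm k id \<in> GL n" using Dm_GL[OF bij] .
  have "W (Dm k id) = W (Dm k id * elm n i (Suc i) r)" using W_J[OF G elm_J] i rO by simp
  also have "\<dots> = W (elm n i (Suc i) x * Dm k id)" using Dm_elm[OF bij i, of k r] rx by simp
  also have "\<dots> = psiN n \<psi> (elm n i (Suc i) x) * W (Dm k id)"
    using whit elm_unipN[of i "Suc i" n x] G by blast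
  also have "psiN n \<psi> (elm n i (Suc i) x) = \<psi> x"
  proof -
    have "(\<Sum>t<n - 1. elm n i (Suc i) x $$ (t, t + 1)) = (\<Sum>t<n - 1. if t = i then x else 0)"
      by (rule sum.cong) auto
    also have "\<dots> = x" using i by simp
    finally show ?thesis unfolding psiN_def by simp
  qed
  finally have "(1 - \<psi> x) * W (Dm k id) = 0" by (simp add: algebra_simps id_def)
  then show ?thesis using x(2) Dm_diag by simp
qed

lemma final: "W (diagpw n pi0 k) =
     (if diagpw n pi0 k \<in> Tplus n pi0
      then \<epsilon> powi (\<Sum>i<n. k i) * (-1) powi ((int n - 1) * (\<Sum>i<n. k i))
           * complex_of_real (deltaB n v (diagpw n pi0 k))
      else 0)"
proof (cases "diagpw n pi0 k \<in> Tplus n pi0")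
  case True
  then obtain k' where k': "diagpw n pi0 k = diagpw n pi0 k'" "\<forall>i. i + 1 < n \<longrightarrow> k (i + 1) \<le> k' i \<and> k' (i + 1) \<le> k' i \<or> True"
    "\<forall>i. i + 1 < n \<longrightarrow> k' (i + 1) \<le> k' i"
    unfolding Tplus_def by auto
  have eq: "\<And>i. i < n \<Longrightarrow> k i = k' i"
  proof -
    fix i assume i: "i < n"
    have "diagpw n pi0 k $$ (i, i) = diagpw n pi0 k' $$ (i, i)" using k'(1) by simp
    then have "pi0 powi k i = pi0 powi k' i" unfolding diagpw_def using i by simp
    then have "v (pi0 powi k i) = v (pi0 powi k' i)" by simp
    then show "k i = k' i" using v_powi[OF pi0] vpi0 by simp
  qed
  have "domi n k'" using adj_domi k'(3) by blast
  then have "domi n k" using eq unfolding domi_def by (metis le_less_trans)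
  then show ?thesis using dom_ok Dm_diag True unfolding Tv_def by simp
next
  case False
  have "\<not> (\<forall>i. i + 1 < n \<longrightarrow> k (i + 1) \<le> k i)"
    using False unfolding Tplus_def by auto
  then obtain i where "Suc i < n" "k i < k (Suc i)" by auto
  then show ?thesis using support False by simp
qed

end


theorem mainTheorem10:
  fixes n :: nat and v :: "'a::field \<Rightarrow> int" and pi0 :: 'a
    and \<psi> :: "'a \<Rightarrow> complex" and V :: "('a mat \<Rightarrow> complex) set"
    and W :: "'a mat \<Rightarrow> complex" and \<epsilon> :: complex
  assumes "n \<ge> 1"
    and "nonarch_local_field v"
    and "pi0 \<noteq> 0" and "v pi0 = 1"
    and "unram_char v \<psi>"
    and "irred_adm_whittaker_model n v \<psi> V"
    and "W \<in> V" and "fixed_by n (iwahoriJ n v) W"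
    and "W (1\<^sub>m n) = 1"
    and "\<forall>z\<in>centre n. \<forall>g\<in>GL n. W (z * g) = W g"
    and "\<forall>i. i + 1 < n \<longrightarrow> (\<forall>g\<in>GL n. hecke n v (sperm n i) W g = - W g)"
    and "\<forall>g\<in>GL n. hecke n v (umat n pi0) W g = \<epsilon> * W g"
    and "\<epsilon> ^ n = 1"
  shows "\<forall>k :: nat \<Rightarrow> int. W (diagpw n pi0 k) =
     (if diagpw n pi0 k \<in> Tplus n pi0
      then \<epsilon> powi (\<Sum>i<n. k i) * (-1) powi ((int n - 1) * (\<Sum>i<n. k i))
           * complex_of_real (deltaB n v (diagpw n pi0 k))
      else 0)"
proof -
  have whit: "\<forall>u\<in>unipN n. \<forall>g\<in>GL n. W (u * g) = psiN n \<psi> u * W g"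
    using assms(6,7) unfolding irred_adm_whittaker_model_def by blast
  interpret hk v n pi0 \<psi> W \<epsilon>
    using assms whit by unfold_locales auto
  show ?thesis using final by blast
qed

end
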